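(* Consider the Boosting SDP for input matrix $\hat A\in\mathbb R^{n\times n}$, labels $\ell\in\{-1,1\}^n$ with $L=\ell\ell^T$, and parameters $0<\zeta<1$, $d>0$, $K\ge10^4$. Suppose there are an $n\times n$ matrix $F$ and a subset $S\subseteq[n]$ with $|S|\ge(1-\theta)n$, where $\theta\le\zeta$, such that: (i) $(F\odot L)_{S\times S}$ is entrywise nonnegative; (ii) $(\hat A-F)_{S\times S}=Y+Z$ with $\|Y\|_{\mathrm{op}}\le Kd$ and $|Z_{ij}|\le Kd/(\zeta n)$ for all $i,j$; (iii) $((\hat A-F)\odot L)_{S\times S}$ is $(10dK^3,\theta dK)$-resolvable. Then setting $\rho=\theta$, $w_i=1$ for $i\notin S$ and $w_i=0$ for $i\in S$, $N$ the indicator matrix of $([n]\setminus S)\times([n]\setminus S)$, and $W$ the indicator matrix of $S\times S$ gives a feasible solution of the Boosting SDP with objective value $\rho=\theta$.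
   Context: Notation: $J$ all-ones matrix, $\mathbf 1$ all-ones vector, $\odot$ entrywise product, $\langle X,Y\rangle=\sum_{ij}X_{ij}Y_{ij}$, $\|\cdot\|_1$ trace norm, $\|\cdot\|_{\mathrm{op}}$ operator norm, $M_{S\times T}$ submatrix indexed by $S\times T$. Resolvability: an $m\times m$ matrix $X$ is $(d_1,d_2)$-resolvable if for all $x_1,\dots,x_m\in[0,1]$ with $\sum_ix_i\le10^{-6}m$, $\langle X,Y_x\rangle\ge d_1\sum_ix_i-d_2m$, where $(Y_x)_{ij}=x_i$. Pseudorectangles: $\mathcal R_n(\theta)$ is the set of $n\times n$ matrices $M$ with $0\le M_{ij}\le1$, $\sum_{ij}|M_{ij}|\le\theta^2n^2$, $\|M\|_1\le\theta n$. Approximate row selectors: $(M,x_1,\dots,x_n)\in\mathcal S_n(\theta,\delta)$ if $0\le M_{ij}\le1$, $0\le x_i\le1$, $\sum_ix_i\le\theta n$, and $M=Y_x-N$ for some $N\in\mathcal R_n(\sqrt{\theta\delta})$. Boosting SDP (inputs $\hat A,\ell$, parameters $\zeta,d,K$ with $0<\zeta<1$, $K\ge10^4$): variables $\rho\in[0,\zeta]$, $w\in\mathbb R^n$, $W\in\mathbb R^{n\times n}$, $N\in\mathcal R_n(\rho)$ with $0\le w_i\le1$, $\sum_iw_i\le\rho n$, $W_{ij}\ge0$, $W_{ij}=1-w_i-w_j+N_{ij}$ for all $i,j$, and for every $\rho'$ with $\rho/K\le\rho'\le\zeta$ and every $(M,x)\in\mathcal S_n(\rho',K\rho')$: $\langle\hat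 A\odot L\odot W,M\rangle\ge10dK^2\big(K\sum_ix_i(1-w_i)-\rho'n\big)$, where $L=\ell\ell^T$. Objective: minimize $\rho$. *)

theory Defs
  imports Complex_Main "Jordan_Normal_Form.Char_Poly"
begin

(* Matrices are functions nat => nat => real; an n x n matrix uses indices < n,
   and a submatrix M_{S x S} is M restricted to indices in S. *)

definition frob :: "nat set \<Rightarrow> (nat \<Rightarrow> nat \<Rightarrow> real) \<Rightarrow> (nat \<Rightarrow> nat \<Rightarrow> real) \<Rightarrow> real" where
  "frob I X Y = (\<Sum>i\<in>I. \<Sum>j\<in>I. X i j * Y i j)"

definition hadamard :: "(nat \<Rightarrow> nat \<Rightarrow> real) \<Rightarrow> (nat \<Rightarrow> nat \<Rightarrow> real) \<Rightarrow> (nat \<Rightarrow> nat \<Rightarrow> real)" where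
  "hadamard X Y = (\<lambda>i j. X i j * Y i j)"

definition rowmat :: "(nat \<Rightarrow> real) \<Rightarrow> (nat \<Rightarrow> nat \<Rightarrow> real)" where
  "rowmat x = (\<lambda>i j. x i)"

definition op_norm :: "nat set \<Rightarrow> (nat \<Rightarrow> nat \<Rightarrow> real) \<Rightarrow> real" where
  "op_norm I Y = Sup {sqrt (\<Sum>i\<in>I. (\<Sum>j\<in>I. Y i j * x j)\<^sup>2) | x. (\<Sum>j\<in>I. (x j)\<^sup>2) \<le> 1}"

(* trace norm of an n x n matrix: sum of singular values, i.e. sum of square roots of the
   eigenvalues (with algebraic multiplicity) of M^T M *)
definition trace_norm :: "nat \<Rightarrow> (nat \<Rightarrow> nat \<Rightarrow> real) \<Rightarrow> real" where
  "trace_norm n M = (let Mm = mat n n (\<lambda>(i, j). M i j); p = char_poly (transpose_mat Mm * Mm)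
     in (\<Sum>e\<in>{e. poly p e = 0}. real (order e p) * sqrt e))"

definition resolvable :: "nat set \<Rightarrow> (nat \<Rightarrow> nat \<Rightarrow> real) \<Rightarrow> real \<Rightarrow> real \<Rightarrow> bool" where
  "resolvable I X d1 d2 \<longleftrightarrow>
     (\<forall>x. (\<forall>i\<in>I. 0 \<le> x i \<and> x i \<le> 1) \<and> (\<Sum>i\<in>I. x i) \<le> 10 powr (-6) * real (card I) \<longrightarrow>
          frob I X (rowmat x) \<ge> d1 * (\<Sum>i\<in>I. x i) - d2 * real (card I))"

definition pseudorect :: "nat \<Rightarrow> real \<Rightarrow> (nat \<Rightarrow> nat \<Rightarrow> real) \<Rightarrow> bool" where
  "pseudorect n \<theta> M \<longleftrightarrow>
     (\<forall>i<n. \<forall>j<n. 0 \<le> M i j \<and> M i j \<le> 1) \<and>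
     (\<Sum>i<n. \<Sum>j<n. \<bar>M i j\<bar>) \<le> \<theta>\<^sup>2 * (real n)\<^sup>2 \<and>
     trace_norm n M \<le> \<theta> * real n"

definition row_selector :: "nat \<Rightarrow> real \<Rightarrow> real \<Rightarrow> (nat \<Rightarrow> nat \<Rightarrow> real) \<Rightarrow> (nat \<Rightarrow> real) \<Rightarrow> bool" where
  "row_selector n \<theta> \<delta> M x \<longleftrightarrow>
     (\<forall>i<n. \<forall>j<n. 0 \<le> M i j \<and> M i j \<le> 1) \<and>
     (\<forall>i<n. 0 \<le> x i \<and> x i \<le> 1) \<and>
     (\<Sum>i<n. x i) \<le> \<theta> * real n \<and>
     (\<exists>N. pseudorect n (sqrt (\<theta> * \<delta>)) N \<and> (\<forall>i<n. \<forall>j<n. M i j = rowmat x i j - N i j))"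

definition boost_feasible :: "nat \<Rightarrow> (nat \<Rightarrow> nat \<Rightarrow> real) \<Rightarrow> (nat \<Rightarrow> real) \<Rightarrow> real \<Rightarrow> real \<Rightarrow> real \<Rightarrow>
     real \<Rightarrow> (nat \<Rightarrow> real) \<Rightarrow> (nat \<Rightarrow> nat \<Rightarrow> real) \<Rightarrow> (nat \<Rightarrow> nat \<Rightarrow> real) \<Rightarrow> bool" where
  "boost_feasible n A l \<zeta> d K \<rho> w W N \<longleftrightarrow>
     0 \<le> \<rho> \<and> \<rho> \<le> \<zeta> \<and>
     pseudorect n \<rho> N \<and>
     (\<forall>i<n. 0 \<le> w i \<and> w i \<le> 1) \<and>
     (\<Sum>i<n. w i) \<le> \<rho> * real n \<and>
     (\<forall>i<n. \<forall>j<n. W i j \<ge> 0 \<and> W i j = 1 - w i - w j + N i j) \<and>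
     (\<forall>\<rho>'. \<rho> / K \<le> \<rho>' \<and> \<rho>' \<le> \<zeta> \<longrightarrow>
        (\<forall>M x. row_selector n \<rho>' (K * \<rho>') M x \<longrightarrow>
           frob {..<n} (hadamard (hadamard A (\<lambda>i j. l i * l j)) W) M
             \<ge> 10 * d * K\<^sup>2 * (K * (\<Sum>i<n. x i * (1 - w i)) - \<rho>' * real n)))"

end

theory Submission
  imports Defs
begin

lemma cs_sum:
  fixes a b :: "nat \<Rightarrow> real"
  shows "(\<Sum>i\<in>I. a i * b i)\<^sup>2 \<le> (\<Sum>i\<in>I. (a i)\<^sup>2) * (\<Sum>i\<in>I. (b i)\<^sup>2)"
proof (cases "finite I")
  case fin: True
  show ?thesis
  proof (cases "(\<Sum>i\<in>I. (b i)\<^sup>2) > 0")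
    case False
    then have "\<forall>i\<in>I. b i = 0"
      using fin by (metis (no_types, lifting) linorder_not_le power2_less_eq_zero_iff sum_nonneg_eq_0_iff zero_le_power2 order.antisym sum_nonneg)
    thus ?thesis by simp
  next
    case True
    define r where "r = (\<Sum>i\<in>I. a i * b i) / (\<Sum>i\<in>I. (b i)\<^sup>2)"
    have "0 \<le> (\<Sum>i\<in>I. (a i - r * b i)\<^sup>2)" by (simp add: sum_nonneg)
    also have "\<dots> = (\<Sum>i\<in>I. (a i)\<^sup>2) - 2 * r * (\<Sum>i\<in>I. a i * b i) + r\<^sup>2 * (\<Sum>i\<in>I. (b i)\<^sup>2)"
      by (simp add: algebra_simps power2_eq_square sum_distrib_left flip: sum.distrib)
    also have "\<dots> = (\<Sum>i\<in>I. (a i)\<^sup>2) - ((\<Sum>i\<in>I. a i * b i))\<^sup>2 / (\<Sum>i\<in>I. (b i)\<^sup>2)"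
      using True by (simp add: r_def power2_eq_square)
    finally show ?thesis using True by (simp add: le_diff_eq pos_divide_le_eq)
  qed
qed simp

definition mm :: "nat \<Rightarrow> (nat \<Rightarrow> nat \<Rightarrow> real) \<Rightarrow> (nat \<Rightarrow> nat \<Rightarrow> real) \<Rightarrow> (nat \<Rightarrow> nat \<Rightarrow> real)" where
  "mm m A B = (\<lambda>i j. \<Sum>k<m. A i k * B k j)"
definition tp :: "(nat \<Rightarrow> nat \<Rightarrow> real) \<Rightarrow> (nat \<Rightarrow> nat \<Rightarrow> real)" where
  "tp A = (\<lambda>i j. A j i)"
definition idm :: "nat \<Rightarrow> nat \<Rightarrow> real" where
  "idm = (\<lambda>i j. if i = j then 1 else 0)"
definition dg :: "(nat \<Rightarrow> real) \<Rightarrow> nat \<Rightarrow> nat \<Rightarrow> real" where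
  "dg d = (\<lambda>i j. if i = j then d i else 0)"
definition orth :: "nat \<Rightarrow> (nat \<Rightarrow> nat \<Rightarrow> real) \<Rightarrow> bool" where
  "orth m W \<longleftrightarrow> (\<forall>i<m. \<forall>j<m. mm m (tp W) W i j = idm i j) \<and> (\<forall>i<m. \<forall>j<m. mm m W (tp W) i j = idm i j)"

lemma mm_assoc: "mm m (mm m A B) C = mm m A (mm m B C)"
  unfolding mm_def
  by (rule ext, rule ext, simp add: sum_distrib_left sum_distrib_right mult.assoc, rule sum.swap)

lemma tp_mm: "tp (mm m A B) = mm m (tp B) (tp A)"
  by (auto simp: mm_def tp_def mult.commute intro!: ext)

lemma tp_tp[simp]: "tp (tp A) = A" by (simp add: tp_def)

lemma mm_idm_left: "i < m \<Longrightarrow> mm m idm A i j = A i j"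
proof -
  assume "i < m"
  have "(\<Sum>k<m. (if i = k then 1 else 0) * A k j) = (\<Sum>k<m. if i = k then A k j else 0)"
    by (rule sum.cong) auto
  thus ?thesis using \<open>i < m\<close> by (simp add: mm_def idm_def)
qed

lemma mm_idm_right: "j < m \<Longrightarrow> mm m A idm i j = A i j"
proof -
  assume "j < m"
  have "(\<Sum>k<m. A i k * (if k = j then 1 else 0)) = (\<Sum>k<m. if k = j then A i k else 0)"
    by (rule sum.cong) auto
  thus ?thesis using \<open>j < m\<close> by (simp add: mm_def idm_def)
qed

lemma mm_congL: "(\<And>k. k < m \<Longrightarrow> A i k = A' i k) \<Longrightarrow> mm m A B i j = mm m A' B i j"
  by (simp add: mm_def)

lemma mm_congR: "(\<And>k. k < m \<Longrightarrow> B k j = B' k j) \<Longrightarrow> mm m A B i j = mm m A B' i j"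
  by (simp add: mm_def)

lemma orth_mm:
  assumes A: "orth m A" and B: "orth m B"
  shows "orth m (mm m A B)"
proof -
  have 1: "mm m (tp (mm m A B)) (mm m A B) i j = idm i j" if "i < m" "j < m" for i j
  proof -
    have "mm m (tp (mm m A B)) (mm m A B) i j = mm m (tp B) (mm m (mm m (tp A) A) B) i j"
      by (simp add: tp_mm mm_assoc)
    also have "\<dots> = mm m (tp B) (mm m idm B) i j"
      by (rule mm_congR, rule mm_congL) (use A in \<open>auto simp: orth_def\<close>)
    also have "\<dots> = mm m (tp B) B i j"
      by (rule mm_congR, simp add: mm_idm_left)
    finally show ?thesis using B that by (simp add: orth_def)
  qed
  have 2: "mm m (mm m A B) (tp (mm m A B)) i j = idm i j" if "i < m" "j < m" for i j
  proof -
    have "mm m (mm m A B) (tp (mm m A B)) i j = mm m A (mm m (mm m B (tp B)) (tp A)) i j"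
      by (simp add: tp_mm mm_assoc)
    also have "\<dots> = mm m A (mm m idm (tp A)) i j"
      by (rule mm_congR, rule mm_congL) (use B in \<open>auto simp: orth_def\<close>)
    also have "\<dots> = mm m A (tp A) i j"
      by (rule mm_congR, simp add: mm_idm_left)
    finally show ?thesis using A that by (simp add: orth_def)
  qed
  show ?thesis using 1 2 by (simp add: orth_def)
qed

lemma real_eig:
  fixes m :: nat and B :: "nat \<Rightarrow> nat \<Rightarrow> real"
  assumes m: "0 < m" and sym: "\<forall>i<m. \<forall>j<m. B i j = B j i"
  shows "\<exists>lam x. (\<exists>k<m. x k \<noteq> 0) \<and> (\<forall>i<m. (\<Sum>j<m. B i j * x j) = lam * x i)"
proof -
  define Bc where "Bc = mat m m (\<lambda>(i,j). complex_of_real (B i j))"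
  have Bc: "Bc \<in> carrier_mat m m" by (simp add: Bc_def)
  have "degree (char_poly Bc) = m" using degree_monic_char_poly[OF Bc] by simp
  hence "\<not> constant (poly (char_poly Bc))" using constant_degree[of "char_poly Bc"] m by simp
  then obtain z where "poly (char_poly Bc) z = 0" using fundamental_theorem_of_algebra by blast
  hence "eigenvalue Bc z" using eigenvalue_root_char_poly[OF Bc] by simp
  then obtain v where v: "v \<in> carrier_vec m" "v \<noteq> 0\<^sub>v m" "Bc *\<^sub>v v = z \<cdot>\<^sub>v v"
    unfolding eigenvalue_def eigenvector_def using Bc by auto
  have comp: "(\<Sum>j<m. complex_of_real (B i j) * v$j) = z * v$i" if "i < m" for i
  proof -
    have "(Bc *\<^sub>v v) $ i = (z \<cdot>\<^sub>v v) $ i" using v(3) by simp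
    thus ?thesis using that v(1) by (simp add: Bc_def scalar_prod_def atLeast0LessThan)
  qed
  define x where "x = (\<lambda>j. Re (v$j))"
  define y where "y = (\<lambda>j. Im (v$j))"
  have ex: "(\<Sum>j<m. B i j * x j) = Re z * x i - Im z * y i" if "i < m" for i
    using arg_cong[OF comp[OF that], of Re] by (simp add: Re_sum x_def y_def)
  have ey: "(\<Sum>j<m. B i j * y j) = Im z * x i + Re z * y i" if "i < m" for i
    using arg_cong[OF comp[OF that], of Im] by (simp add: Im_sum x_def y_def)
  have swap: "(\<Sum>i<m. y i * (\<Sum>j<m. B i j * x j)) = (\<Sum>i<m. x i * (\<Sum>j<m. B i j * y j))"
  proof -
    have "(\<Sum>i<m. y i * (\<Sum>j<m. B i j * x j)) = (\<Sum>i<m. \<Sum>j<m. y i * B i j * x j)"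
      by (simp add: sum_distrib_left mult.assoc)
    also have "\<dots> = (\<Sum>j<m. \<Sum>i<m. y i * B i j * x j)" by (rule sum.swap)
    also have "\<dots> = (\<Sum>j<m. x j * (\<Sum>i<m. B j i * y i))"
      by (auto simp: sum_distrib_left sym mult.commute mult.left_commute intro!: sum.cong)
    finally show ?thesis .
  qed
  have L: "(\<Sum>i<m. y i * (\<Sum>j<m. B i j * x j)) = Re z * (\<Sum>i<m. x i * y i) - Im z * (\<Sum>i<m. (y i)\<^sup>2)"
  proof -
    have "(\<Sum>i<m. y i * (\<Sum>j<m. B i j * x j)) = (\<Sum>i<m. Re z * (x i * y i) - Im z * (y i)\<^sup>2)"
    proof (rule sum.cong[OF refl])
      fix i assume "i \<in> {..<m}"
      hence "(\<Sum>j<m. B i j * x j) = Re z * x i - Im z * y i" using ex by simp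
      thus "y i * (\<Sum>j<m. B i j * x j) = Re z * (x i * y i) - Im z * (y i)\<^sup>2"
        by (simp only:) (simp add: algebra_simps power2_eq_square)
    qed
    thus ?thesis by (simp add: sum_subtractf sum_distrib_left)
  qed
  have R: "(\<Sum>i<m. x i * (\<Sum>j<m. B i j * y j)) = Im z * (\<Sum>i<m. (x i)\<^sup>2) + Re z * (\<Sum>i<m. x i * y i)"
  proof -
    have "(\<Sum>i<m. x i * (\<Sum>j<m. B i j * y j)) = (\<Sum>i<m. Im z * (x i)\<^sup>2 + Re z * (x i * y i))"
    proof (rule sum.cong[OF refl])
      fix i assume "i \<in> {..<m}"
      hence "(\<Sum>j<m. B i j * y j) = Im z * x i + Re z * y i" using ey by simp
      thus "x i * (\<Sum>j<m. B i j * y j) = Im z * (x i)\<^sup>2 + Re z * (x i * y i)"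
        by (simp only:) (simp add: algebra_simps power2_eq_square)
    qed
    thus ?thesis by (simp add: sum.distrib sum_distrib_left)
  qed
  have im0: "Im z * ((\<Sum>i<m. (x i)\<^sup>2) + (\<Sum>i<m. (y i)\<^sup>2)) = 0"
    using swap L R by (simp add: algebra_simps)
  obtain k where k: "k < m" "v $ k \<noteq> 0"
    using v(1,2) by (metis carrier_vecD eq_vecI index_zero_vec(1) index_zero_vec(2))
  have "x k \<noteq> 0 \<or> y k \<noteq> 0" using k(2) by (simp add: x_def y_def complex_eq_iff)
  hence "(x k)\<^sup>2 + (y k)\<^sup>2 > 0" by (auto simp: add_pos_nonneg add_nonneg_pos)
  moreover have "(x k)\<^sup>2 \<le> (\<Sum>i<m. (x i)\<^sup>2)" "(y k)\<^sup>2 \<le> (\<Sum>i<m. (y i)\<^sup>2)"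
    using k(1) by (auto intro!: member_le_sum)
  ultimately have "(\<Sum>i<m. (x i)\<^sup>2) + (\<Sum>i<m. (y i)\<^sup>2) > 0" by linarith
  with im0 have imz: "Im z = 0" by simp
  show ?thesis
  proof (cases "x k \<noteq> 0")
    case True
    show ?thesis using True k(1) ex imz by (intro exI[of _ "Re z"] exI[of _ x]) auto
  next
    case False
    hence "y k \<noteq> 0" using \<open>x k \<noteq> 0 \<or> y k \<noteq> 0\<close> by simp
    show ?thesis using \<open>y k \<noteq> 0\<close> k(1) ey imz by (intro exI[of _ "Re z"] exI[of _ y]) auto
  qed
qed

lemma tp_idm[simp]: "tp idm = idm"
  by (auto simp: tp_def idm_def intro!: ext)

lemma orth_idm: "orth m idm"
  unfolding orth_def tp_idm by (simp add: mm_idm_left)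

lemma householder:
  fixes u :: "nat \<Rightarrow> real"
  assumes m: "0 < m" and u: "(\<Sum>k<m. (u k)\<^sup>2) = 1"
  shows "\<exists>H. orth m H \<and> (\<forall>i j. H i j = H j i) \<and> (\<forall>i<m. H i 0 = u i)"
proof -
  have split: "(\<Sum>k<m. f k) = f 0 + (\<Sum>k\<in>{1..<m}. f k)" for f :: "nat \<Rightarrow> real"
    using m by (metis Suc_pred atLeast0LessThan lessThan_Suc_eq_insert_0 sum.atLeast_Suc_lessThan One_nat_def)
  have u0le: "(u 0)\<^sup>2 \<le> 1"
    using u split[of "\<lambda>k. (u k)\<^sup>2"] by (metis le_add_same_cancel1 sum_nonneg zero_le_power2)
  show ?thesis
  proof (cases "u 0 = 1")
    case True
    have "(\<Sum>k\<in>{1..<m}. (u k)\<^sup>2) = 0" using u split[of "\<lambda>k. (u k)\<^sup>2"] True by simp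
    hence "\<forall>k\<in>{1..<m}. (u k)\<^sup>2 = 0" by (simp add: sum_nonneg_eq_0_iff)
    hence uz: "\<forall>k. 0 < k \<and> k < m \<longrightarrow> u k = 0" by auto
    show ?thesis
      by (rule exI[of _ idm]) (use True uz in \<open>auto simp: orth_idm, auto simp: idm_def\<close>)
  next
    case False
    have "u 0 \<le> 1" using u0le by (metis abs_le_D1 abs_square_le_1)
    hence u01: "u 0 < 1" using False by simp
    have sum_idm: "(\<Sum>k<m. idm k i * f k) = f i" if "i < m" for i and f :: "nat \<Rightarrow> real"
    proof -
      have "(\<Sum>k<m. idm k i * f k) = (\<Sum>k<m. if k = i then f k else 0)"
        by (rule sum.cong) (auto simp: idm_def)
      thus ?thesis using that by simp
    qed
    define w where "w = (\<lambda>k. u k - idm k 0)"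
    define s where "s = (\<Sum>k<m. (w k)\<^sup>2)"
    have "s = (\<Sum>k<m. (u k)\<^sup>2 - 2 * u k * idm k 0 + idm k 0)"
      unfolding s_def w_def by (rule sum.cong) (auto simp: idm_def power2_eq_square algebra_simps)
    also have "\<dots> = 1 - 2 * u 0 + 1"
    proof -
      have a: "(\<Sum>k<m. 2 * u k * idm k 0) = 2 * u 0" using sum_idm[OF m, of "\<lambda>k. 2 * u k"] by (simp add: mult.commute)
      have b: "(\<Sum>k<m. idm k 0) = 1" using sum_idm[OF m, of "\<lambda>k. 1"] by simp
      show ?thesis by (simp add: sum.distrib sum_subtractf u a b)
    qed
    finally have s: "s = 2 - 2 * u 0" by simp
    hence spos: "s > 0" using u01 by simp
    define c where "c = 2 / s"
    define H where "H = (\<lambda>i j. idm i j - c * w i * w j)"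
    have Hsym: "\<forall>i j. H i j = H j i" by (simp add: H_def idm_def)
    have tpH: "tp H = H" using Hsym by (auto simp: tp_def intro!: ext)
    have HH: "mm m H H i j = idm i j" if "i < m" "j < m" for i j
    proof -
      have sidm: "(\<Sum>k<m. idm i k * f k) = f i" for f :: "nat \<Rightarrow> real"
        using sum_idm[OF that(1), of f] by (simp add: idm_def eq_commute)
      have "mm m H H i j = (\<Sum>k<m. idm i k * idm k j - idm i k * (c * w k * w j) - idm k j * (c * w i * w k) + (c * c * w i * w j) * (w k)\<^sup>2)"
        unfolding mm_def H_def by (rule sum.cong[OF refl]) (simp add: ring_distribs power2_eq_square mult_ac)
      also have "\<dots> = (\<Sum>k<m. idm i k * idm k j) - (\<Sum>k<m. idm i k * (c * w k * w j)) - (\<Sum>k<m. idm k j * (c * w i * w k)) + (c * c * w i * w j) * s"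
        unfolding s_def by (simp only: sum.distrib sum_subtractf sum_distrib_left)
      also have "\<dots> = idm i j - c * w i * w j - c * w i * w j + (c * c * w i * w j) * s"
        using sidm[of "\<lambda>k. idm k j"] sidm[of "\<lambda>k. c * w k * w j"] sum_idm[OF that(2), of "\<lambda>k. c * w i * w k"] by simp
      also have "\<dots> = idm i j + c * w i * w j * (c * s - 2)" by (simp add: algebra_simps)
      also have "c * s = 2" using spos by (simp add: c_def)
      finally show ?thesis by simp
    qed
    have "orth m H" unfolding orth_def tpH using HH by simp
    moreover have "H i 0 = u i" if "i < m" for i
    proof -
      have w0: "w 0 = u 0 - 1" by (simp add: w_def idm_def)
      have cw: "c * w 0 = -1" unfolding c_def s w0 using u01 by (simp add: field_simps)
      have "H i 0 = idm i 0 - (c * w 0) * w i" by (simp add: H_def mult_ac)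
      also have "\<dots> = idm i 0 + w i" by (simp add: cw)
      finally show ?thesis by (simp add: w_def)
    qed
    ultimately show ?thesis using Hsym by blast
  qed
qed

lemma mm_dg: "mm m (mm m W (dg d)) (tp W) i j = (\<Sum>k<m. W i k * d k * W j k)"
proof -
  have "mm m W (dg d) i k = W i k * d k" if "k < m" for k
  proof -
    have "mm m W (dg d) i k = (\<Sum>l<m. if l = k then W i l * d l else 0)"
      unfolding mm_def dg_def by (rule sum.cong) auto
    thus ?thesis using that by simp
  qed
  thus ?thesis unfolding mm_def[of m "mm m W (dg d)"] tp_def by (auto intro!: sum.cong)
qed

lemma mm_cong_mid:
  assumes "\<forall>l<m. \<forall>k<m. C l k = C' l k"
  shows "mm m (mm m A C) D i j = mm m (mm m A C') D i j"
  by (rule mm_congL, rule mm_congR) (use assms in auto)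

lemma spectral:
  fixes B :: "nat \<Rightarrow> nat \<Rightarrow> real"
  assumes "\<forall>i<m. \<forall>j<m. B i j = B j i"
  shows "\<exists>W d. orth m W \<and> (\<forall>i<m. \<forall>j<m. B i j = (\<Sum>k<m. W i k * d k * W j k))"
  using assms
proof (induction m arbitrary: B)
  case 0
  show ?case by (rule exI[of _ idm]) (simp add: orth_def)
next
  case (Suc m)
  define m1 where "m1 = Suc m"
  have symB: "\<forall>i<m1. \<forall>j<m1. B i j = B j i" using Suc.prems m1_def by simp
  obtain lam x where x: "\<exists>k<m1. x k \<noteq> 0" and Bx: "\<forall>i<m1. (\<Sum>j<m1. B i j * x j) = lam * x i"
    using real_eig[of m1 B] symB m1_def by auto
  define q where "q = (\<Sum>k<m1. (x k)\<^sup>2)"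
  have qpos: "q > 0"
  proof -
    obtain k where "k < m1" "x k \<noteq> 0" using x by blast
    hence "(x k)\<^sup>2 > 0" "(x k)\<^sup>2 \<le> q" unfolding q_def by (auto intro!: member_le_sum)
    thus ?thesis by linarith
  qed
  define u where "u = (\<lambda>k. x k / sqrt q)"
  have u1: "(\<Sum>k<m1. (u k)\<^sup>2) = 1"
    using qpos by (simp add: u_def power_divide q_def[symmetric] flip: sum_divide_distrib)
  have Bu: "(\<Sum>j<m1. B i j * u j) = lam * u i" if "i < m1" for i
    using Bx that by (simp add: u_def sum_divide_distrib[symmetric] mult.assoc)
  obtain H where H: "orth m1 H" and Hsym: "\<forall>i j. H i j = H j i" and H0: "\<forall>i<m1. H i 0 = u i"
    using householder[of m1 u] u1 m1_def by auto
  have tpH: "tp H = H" using Hsym by (auto simp: tp_def intro!: ext)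
  have HH: "mm m1 H H i j = idm i j" if "i < m1" "j < m1" for i j
    using H that unfolding orth_def tpH by simp
  define C where "C = mm m1 (mm m1 H B) H"
  have Csum: "C i j = (\<Sum>k<m1. \<Sum>a<m1. H i a * B a k * H k j)" for i j
    unfolding C_def mm_def by (simp add: sum_distrib_right)
  have Csym: "C i j = C j i" if "i < m1" "j < m1" for i j
  proof -
    have "C i j = (\<Sum>k<m1. \<Sum>a<m1. H i a * B a k * H k j)" by (rule Csum)
    also have "\<dots> = (\<Sum>a<m1. \<Sum>k<m1. H i a * B a k * H k j)" by (rule sum.swap)
    also have "\<dots> = (\<Sum>k<m1. \<Sum>a<m1. H j a * B a k * H k i)"
      using symB Hsym by (auto intro!: sum.cong simp: mult_ac)
    also have "\<dots> = C j i" by (rule Csum[symmetric])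
    finally show ?thesis .
  qed
  have C0: "C i 0 = lam * idm i 0" if "i < m1" for i
  proof -
    have "C i 0 = mm m1 H (mm m1 B H) i 0" unfolding C_def by (simp add: mm_assoc)
    also have "\<dots> = mm m1 H (\<lambda>a j. lam * H a j) i 0"
    proof (rule mm_congR)
      fix a assume "a < m1"
      have "mm m1 B H a 0 = (\<Sum>k<m1. B a k * u k)" unfolding mm_def using H0 by (auto intro!: sum.cong)
      thus "mm m1 B H a 0 = lam * H a 0" using Bu[OF \<open>a < m1\<close>] H0 \<open>a < m1\<close> by simp
    qed
    also have "\<dots> = lam * mm m1 H H i 0" by (simp add: mm_def sum_distrib_left mult_ac)
    also have "\<dots> = lam * idm i 0" using HH that m1_def by simp
    finally show ?thesis .
  qed
  define B' where "B' = (\<lambda>i j. C (Suc i) (Suc j))"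
  have symB': "\<forall>i<m. \<forall>j<m. B' i j = B' j i" using Csym m1_def by (simp add: B'_def)
  obtain W' d' where W': "orth m W'" and B'W: "\<forall>i<m. \<forall>j<m. B' i j = (\<Sum>k<m. W' i k * d' k * W' j k)"
    using Suc.IH[OF symB'] by blast
  define E where "E = (\<lambda>i j. case i of 0 \<Rightarrow> (if j = 0 then 1 else 0) | Suc i' \<Rightarrow> (case j of 0 \<Rightarrow> 0 | Suc j' \<Rightarrow> W' i' j'))"
  define d where "d = (\<lambda>k. case k of 0 \<Rightarrow> lam | Suc k' \<Rightarrow> d' k')"
  have W'c: "\<forall>i<m. \<forall>j<m. (\<Sum>k<m. W' k i * W' k j) = idm i j"
    using W' unfolding orth_def mm_def tp_def by simp
  have W'r: "\<forall>i<m. \<forall>j<m. (\<Sum>k<m. W' i k * W' j k) = idm i j"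
    using W' unfolding orth_def mm_def tp_def by simp
  have orthE: "orth m1 E"
    unfolding orth_def
  proof (intro conjI allI impI)
    fix i j assume ij: "i < m1" "j < m1"
    show "mm m1 (tp E) E i j = idm i j"
    proof (cases i)
      case 0 thus ?thesis by (cases j) (simp_all add: mm_def tp_def E_def idm_def m1_def sum.lessThan_Suc_shift del: sum.lessThan_Suc)
    next
      case (Suc i') thus ?thesis using ij W'c
        by (cases j) (simp_all add: mm_def tp_def E_def idm_def m1_def sum.lessThan_Suc_shift del: sum.lessThan_Suc)
    qed
  next
    fix i j assume ij: "i < m1" "j < m1"
    show "mm m1 E (tp E) i j = idm i j"
    proof (cases i)
      case 0 thus ?thesis by (cases j) (simp_all add: mm_def tp_def E_def idm_def m1_def sum.lessThan_Suc_shift del: sum.lessThan_Suc)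
    next
      case (Suc i') thus ?thesis using ij W'r
        by (cases j) (simp_all add: mm_def tp_def E_def idm_def m1_def sum.lessThan_Suc_shift del: sum.lessThan_Suc)
    qed
  qed
  have CE: "C i j = (\<Sum>k<m1. E i k * d k * E j k)" if ij: "i < m1" "j < m1" for i j
  proof (cases i)
    case 0 thus ?thesis
      using C0[OF ij(2)] Csym[OF ij] C0[OF ij(1)]
      by (cases j) (simp_all add: E_def d_def idm_def m1_def sum.lessThan_Suc_shift del: sum.lessThan_Suc)
  next
    case (Suc i')
    show ?thesis
    proof (cases j)
      case 0 thus ?thesis using Suc C0[OF ij(1)]
        by (simp add: E_def d_def idm_def m1_def sum.lessThan_Suc_shift del: sum.lessThan_Suc)
    next
      case (Suc j') thus ?thesis using \<open>i = Suc i'\<close> ij B'W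
        by (simp add: E_def d_def m1_def sum.lessThan_Suc_shift B'_def del: sum.lessThan_Suc)
    qed
  qed
  define W where "W = mm m1 H E"
  have orthW: "orth m1 W" unfolding W_def using orth_mm[OF H orthE] .
  have final: "B i j = (\<Sum>k<m1. W i k * d k * W j k)" if ij: "i < m1" "j < m1" for i j
  proof -
    have "mm m1 (mm m1 H C) H i j = mm m1 (mm m1 H H) (mm m1 B (mm m1 H H)) i j"
      unfolding C_def by (simp add: mm_assoc)
    also have "\<dots> = mm m1 idm (mm m1 B (mm m1 H H)) i j"
      by (rule mm_congL) (use HH ij in auto)
    also have "\<dots> = mm m1 B (mm m1 H H) i j" using ij by (simp add: mm_idm_left)
    also have "\<dots> = mm m1 B idm i j" by (rule mm_congR) (use HH ij in auto)
    also have "\<dots> = B i j" using ij by (simp add: mm_idm_right)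
    finally have 1: "B i j = mm m1 (mm m1 H C) H i j" by simp
    have 2: "mm m1 (mm m1 H C) H i j = mm m1 (mm m1 H (mm m1 (mm m1 E (dg d)) (tp E))) H i j"
      by (rule mm_cong_mid) (simp add: CE mm_dg)
    have 3: "mm m1 (mm m1 H (mm m1 (mm m1 E (dg d)) (tp E))) H = mm m1 (mm m1 W (dg d)) (tp W)"
      unfolding W_def by (simp add: mm_assoc tp_mm tpH)
    show ?thesis using 1 2 3 by (simp add: mm_dg)
  qed
  show ?case using orthW final m1_def by blast
qed

lemma mat_mult_fn:
  "mat n n f * mat n n g = mat n n (\<lambda>(i,j). \<Sum>k<n. f (i,k) * g (k,j))"
  by (rule eq_matI) (auto simp: scalar_prod_def atLeast0LessThan row_def col_def)

lemma transpose_fn: "transpose_mat (mat n n f) = mat n n (\<lambda>(i,j). f (j,i))"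
  by (rule eq_matI) auto

lemma lin_prod_nz: "(\<Prod>a\<leftarrow>xs. [:- a, 1:]) \<noteq> (0 :: real poly)"
proof (induction xs)
  case (Cons a xs)
  have "[:- a, 1:] \<noteq> (0 :: real poly)" by simp
  thus ?case using Cons by (simp only: list.map prod_list.Cons mult_eq_0_iff) simp
qed simp

lemma lin_prod_root: "poly (\<Prod>a\<leftarrow>xs. [:- a, 1:]) e = 0 \<longleftrightarrow> e \<in> set (xs :: real list)"
  by (induction xs) (simp_all only: list.map prod_list.Cons prod_list.Nil poly_mult mult_eq_0_iff, auto)

lemma lin_prod_order: "order e (\<Prod>a\<leftarrow>xs. [:- a, 1:]) = count_list xs (e :: real)"
proof (induction xs)
  case Nil thus ?case by (simp add: order_1)
next
  case (Cons a xs)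
  have "order e (\<Prod>a\<leftarrow>a#xs. [:- a, 1:]) = order e [:- a, 1:] + order e (\<Prod>a\<leftarrow>xs. [:- a, 1:])"
    using lin_prod_nz[of "a#xs"] by (simp only: list.map prod_list.Cons) (rule order_mult)
  thus ?case using Cons by (simp add: order_linear')
qed

lemma sum_list_count_real:
  fixes f :: "'a \<Rightarrow> real"
  shows "sum_list (map f xs) = (\<Sum>x\<in>set xs. real (count_list xs x) * f x)"
proof (induction xs)
  case (Cons x xs)
  show ?case
  proof (cases "x \<in> set xs")
    case True
    have "(\<Sum>y\<in>set (x#xs). real (count_list (x#xs) y) * f y) = (\<Sum>y\<in>set xs. real (count_list xs y) * f y + (if y = x then f y else 0))"
      using True by (intro sum.cong) (auto simp: algebra_simps)
    also have "\<dots> = (\<Sum>y\<in>set xs. real (count_list xs y) * f y) + f x"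
      using True by (simp add: sum.distrib)
    also have "\<dots> = sum_list (map f (x#xs))" using Cons.IH by simp
    finally show ?thesis by simp
  next
    case False
    hence "count_list xs x = 0" by (simp add: count_list_0_iff)
    moreover have "(\<Sum>y\<in>set xs. real (count_list (x#xs) y) * f y) = (\<Sum>y\<in>set xs. real (count_list xs y) * f y)"
      using False by (intro sum.cong) auto
    ultimately show ?thesis using False Cons.IH by simp
  qed
qed simp

lemma trace_norm_eig:
  fixes M W :: "nat \<Rightarrow> nat \<Rightarrow> real" and d :: "nat \<Rightarrow> real"
  assumes W: "orth n W"
    and MW: "\<forall>i<n. \<forall>j<n. (\<Sum>k<n. M k i * M k j) = (\<Sum>k<n. W i k * d k * W j k)"
  shows "trace_norm n M = (\<Sum>k<n. sqrt (d k))"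
proof -
  define Mm where "Mm = mat n n (\<lambda>(i, j). M i j)"
  define A where "A = transpose_mat Mm * Mm"
  define Wm where "Wm = mat n n (\<lambda>(i, j). W i j)"
  define Wt where "Wt = mat n n (\<lambda>(i, j). W j i)"
  define Dm where "Dm = mat n n (\<lambda>(i, j). if i = j then d i else (0::real))"
  have A: "A = mat n n (\<lambda>(i,j). \<Sum>k<n. M k i * M k j)"
    unfolding A_def Mm_def transpose_fn mat_mult_fn by simp
  have Wc: "\<forall>i<n. \<forall>j<n. (\<Sum>k<n. W k i * W k j) = idm i j"
    using W unfolding orth_def mm_def tp_def by simp
  have Wr: "\<forall>i<n. \<forall>j<n. (\<Sum>k<n. W i k * W j k) = idm i j"
    using W unfolding orth_def mm_def tp_def by simp
  have PQ: "Wm * Wt = 1\<^sub>m n"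
    unfolding Wm_def Wt_def mat_mult_fn by (rule eq_matI) (auto simp: Wr idm_def)
  have QP: "Wt * Wm = 1\<^sub>m n"
    unfolding Wm_def Wt_def mat_mult_fn by (rule eq_matI) (auto simp: Wc idm_def)
  have WD: "Wm * Dm = mat n n (\<lambda>(i,k). W i k * d k)"
  proof -
    have "(\<Sum>k<n. W i k * (if k = j then d k else 0)) = W i j * d j" if "j < n" for i j
    proof -
      have "(\<Sum>k<n. W i k * (if k = j then d k else 0)) = (\<Sum>k<n. if k = j then W i k * d k else 0)"
        by (rule sum.cong) auto
      thus ?thesis using that by simp
    qed
    thus ?thesis unfolding Wm_def Dm_def mat_mult_fn by (intro eq_matI) auto
  qed
  have AWDW: "A = Wm * Dm * Wt"
    unfolding WD Wt_def mat_mult_fn A by (rule eq_matI) (auto simp: MW)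
  have carr: "A \<in> carrier_mat n n" "Dm \<in> carrier_mat n n" "Wm \<in> carrier_mat n n" "Wt \<in> carrier_mat n n"
    by (simp_all add: A Dm_def Wm_def Wt_def)
  have sim: "similar_mat A Dm"
    unfolding similar_mat_def similar_mat_wit_def
    by (rule exI[of _ Wm], rule exI[of _ Wt]) (use carr PQ QP AWDW in \<open>auto simp: Let_def\<close>)
  have ut: "upper_triangular Dm" unfolding Dm_def upper_triangular_def by auto
  have "char_poly A = char_poly Dm" by (rule char_poly_similar[OF sim])
  also have "\<dots> = (\<Prod>a\<leftarrow>diag_mat Dm. [:- a, 1:])"
    by (rule char_poly_upper_triangular[OF carr(2) ut])
  also have "diag_mat Dm = map d [0..<n]" unfolding diag_mat_def Dm_def by auto
  finally have cp: "char_poly A = (\<Prod>a\<leftarrow>map d [0..<n]. [:- a, 1:])" .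
  define ds where "ds = map d [0..<n]"
  have "trace_norm n M = (\<Sum>e\<in>{e. poly (char_poly A) e = 0}. real (order e (char_poly A)) * sqrt e)"
    unfolding trace_norm_def Let_def A_def Mm_def by simp
  also have "\<dots> = (\<Sum>e\<in>set ds. real (count_list ds e) * sqrt e)"
    unfolding cp ds_def[symmetric] lin_prod_root lin_prod_order by simp
  also have "\<dots> = sum_list (map sqrt ds)" by (rule sum_list_count_real[symmetric])
  also have "\<dots> = (\<Sum>k<n. sqrt (d k))"
    unfolding ds_def by (simp add: sum_list_sum_nth atLeast0LessThan)
  finally show ?thesis .
qed

lemma abs_sum_le_cs:
  fixes a b :: "nat \<Rightarrow> real"
  shows "\<bar>\<Sum>i\<in>I. a i * b i\<bar> \<le> sqrt (\<Sum>i\<in>I. (a i)\<^sup>2) * sqrt (\<Sum>i\<in>I. (b i)\<^sup>2)"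
proof -
  have "\<bar>\<Sum>i\<in>I. a i * b i\<bar> = sqrt ((\<Sum>i\<in>I. a i * b i)\<^sup>2)" by simp
  also have "\<dots> \<le> sqrt ((\<Sum>i\<in>I. (a i)\<^sup>2) * (\<Sum>i\<in>I. (b i)\<^sup>2))"
    by (rule real_sqrt_le_mono, rule cs_sum)
  finally show ?thesis by (simp add: real_sqrt_mult)
qed

lemma tn_dual:
  fixes G M :: "nat \<Rightarrow> nat \<Rightarrow> real" and c :: real
  assumes c: "c \<ge> 0" and G: "\<forall>v. (\<Sum>i<n. (\<Sum>j<n. G i j * v j)\<^sup>2) \<le> c\<^sup>2 * (\<Sum>j<n. (v j)\<^sup>2)"
  shows "\<bar>\<Sum>i<n. \<Sum>j<n. G i j * M i j\<bar> \<le> c * trace_norm n M"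
proof -
  define Bm where "Bm = mm n (tp M) M"
  have "\<forall>i<n. \<forall>j<n. Bm i j = Bm j i" unfolding Bm_def mm_def tp_def by (auto simp: mult.commute)
  then obtain W d where W: "orth n W" and BW: "\<forall>i<n. \<forall>j<n. Bm i j = (\<Sum>k<n. W i k * d k * W j k)"
    using spectral by blast
  have tn: "trace_norm n M = (\<Sum>k<n. sqrt (d k))"
    by (rule trace_norm_eig[OF W]) (use BW in \<open>simp add: Bm_def mm_def tp_def\<close>)
  have WW: "mm n (tp W) W i j = idm i j" "mm n W (tp W) i j = idm i j" if "i < n" "j < n" for i j
    using W that unfolding orth_def by auto
  define NW where "NW = mm n M W"
  define GW where "GW = mm n G W"
  have dk: "d k = (\<Sum>l<n. (NW l k)\<^sup>2)" if k: "k < n" for k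
  proof -
    have "(\<Sum>l<n. (NW l k)\<^sup>2) = mm n (tp NW) NW k k" by (simp add: mm_def tp_def power2_eq_square)
    also have "\<dots> = mm n (mm n (tp W) Bm) W k k" unfolding NW_def Bm_def by (simp only: tp_mm mm_assoc)
    also have "\<dots> = mm n (mm n (tp W) (mm n (mm n W (dg d)) (tp W))) W k k"
      by (rule mm_cong_mid) (use BW in \<open>simp add: mm_dg\<close>)
    also have "\<dots> = mm n (mm n (tp W) W) (mm n (dg d) (mm n (tp W) W)) k k" by (simp only: mm_assoc)
    also have "\<dots> = mm n idm (mm n (dg d) (mm n (tp W) W)) k k"
      by (rule mm_congL) (simp add: WW k)
    also have "\<dots> = mm n (dg d) (mm n (tp W) W) k k" using k by (simp add: mm_idm_left)
    also have "\<dots> = mm n (dg d) idm k k" by (rule mm_congR) (simp add: WW k)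
    also have "\<dots> = d k" using k by (simp add: mm_idm_right dg_def)
    finally show ?thesis by simp
  qed
  have key: "(\<Sum>i<n. \<Sum>j<n. G i j * M i j) = (\<Sum>k<n. \<Sum>l<n. GW l k * NW l k)"
  proof -
    have e1: "(\<Sum>k<n. GW l k * NW l k) = mm n GW (tp NW) l l" for l by (simp add: mm_def tp_def)
    have tNW: "tp NW = mm n (tp W) (tp M)" unfolding NW_def by (simp only: tp_mm)
    have "(\<Sum>k<n. \<Sum>l<n. GW l k * NW l k) = (\<Sum>l<n. \<Sum>k<n. GW l k * NW l k)" by (rule sum.swap)
    also have "\<dots> = (\<Sum>l<n. mm n GW (mm n (tp W) (tp M)) l l)"
      by (simp only: e1 tNW)
    also have "\<dots> = (\<Sum>l<n. mm n (mm n G (mm n W (tp W))) (tp M) l l)"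
      unfolding GW_def by (simp only: mm_assoc)
    also have "\<dots> = (\<Sum>l<n. mm n (mm n G idm) (tp M) l l)"
      by (intro sum.cong refl mm_cong_mid) (simp add: WW)
    also have "\<dots> = (\<Sum>l<n. \<Sum>j<n. G l j * M l j)"
    proof (intro sum.cong refl)
      fix l
      show "mm n (mm n G idm) (tp M) l l = (\<Sum>j<n. G l j * M l j)"
        unfolding mm_def[of n "mm n G idm"] by (intro sum.cong refl) (simp add: mm_idm_right tp_def)
    qed
    finally show ?thesis by simp
  qed
  have GWk: "(\<Sum>l<n. (GW l k)\<^sup>2) \<le> c\<^sup>2" if k: "k < n" for k
  proof -
    have "(\<Sum>l<n. (GW l k)\<^sup>2) \<le> c\<^sup>2 * (\<Sum>j<n. (W j k)\<^sup>2)"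
      using G[rule_format, of "\<lambda>j. W j k"] by (simp add: GW_def mm_def)
    also have "(\<Sum>j<n. (W j k)\<^sup>2) = 1" using WW(1)[OF k k] by (simp add: mm_def tp_def idm_def power2_eq_square)
    finally show ?thesis by simp
  qed
  have "\<bar>\<Sum>i<n. \<Sum>j<n. G i j * M i j\<bar> \<le> (\<Sum>k<n. \<bar>\<Sum>l<n. GW l k * NW l k\<bar>)"
    unfolding key by (rule sum_abs)
  also have "\<dots> \<le> (\<Sum>k<n. c * sqrt (d k))"
  proof (rule sum_mono)
    fix k assume "k \<in> {..<n}"
    hence k: "k < n" by simp
    have "\<bar>\<Sum>l<n. GW l k * NW l k\<bar> \<le> sqrt (\<Sum>l<n. (GW l k)\<^sup>2) * sqrt (\<Sum>l<n. (NW l k)\<^sup>2)"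
      by (rule abs_sum_le_cs)
    also have "\<dots> \<le> c * sqrt (d k)"
    proof (rule mult_mono)
      show "sqrt (\<Sum>l<n. (GW l k)\<^sup>2) \<le> c"
        using real_sqrt_le_mono[OF GWk[OF k]] c by simp
    qed (simp_all add: dk[OF k] c sum_nonneg)
    finally show "\<bar>\<Sum>l<n. GW l k * NW l k\<bar> \<le> c * sqrt (d k)" .
  qed
  also have "\<dots> = c * trace_norm n M" by (simp add: tn sum_distrib_left)
  finally show ?thesis .
qed

lemma spectral_M:
  fixes M :: "nat \<Rightarrow> nat \<Rightarrow> real"
  shows "\<exists>W d. orth n W \<and> trace_norm n M = (\<Sum>k<n. sqrt (d k)) \<and>
     (\<forall>k<n. d k = (\<Sum>l<n. (mm n M W l k)\<^sup>2)) \<and>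
     (\<forall>i<n. \<forall>k<n. mm n (mm n (tp M) M) W i k = d k * W i k)"
proof -
  define Bm where "Bm = mm n (tp M) M"
  have "\<forall>i<n. \<forall>j<n. Bm i j = Bm j i" unfolding Bm_def mm_def tp_def by (auto simp: mult.commute)
  then obtain W d where W: "orth n W" and BW: "\<forall>i<n. \<forall>j<n. Bm i j = (\<Sum>k<n. W i k * d k * W j k)"
    using spectral by blast
  have tn: "trace_norm n M = (\<Sum>k<n. sqrt (d k))"
    by (rule trace_norm_eig[OF W]) (use BW in \<open>simp add: Bm_def mm_def tp_def\<close>)
  have WW: "mm n (tp W) W i j = idm i j" "mm n W (tp W) i j = idm i j" if "i < n" "j < n" for i j
    using W that unfolding orth_def by auto
  define NW where "NW = mm n M W"
  have dk: "d k = (\<Sum>l<n. (NW l k)\<^sup>2)" if k: "k < n" for k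
  proof -
    have "(\<Sum>l<n. (NW l k)\<^sup>2) = mm n (tp NW) NW k k" by (simp add: mm_def tp_def power2_eq_square)
    also have "\<dots> = mm n (mm n (tp W) Bm) W k k" unfolding NW_def Bm_def by (simp only: tp_mm mm_assoc)
    also have "\<dots> = mm n (mm n (tp W) (mm n (mm n W (dg d)) (tp W))) W k k"
      by (rule mm_cong_mid) (use BW in \<open>simp add: mm_dg\<close>)
    also have "\<dots> = mm n (mm n (tp W) W) (mm n (dg d) (mm n (tp W) W)) k k" by (simp only: mm_assoc)
    also have "\<dots> = mm n idm (mm n (dg d) (mm n (tp W) W)) k k"
      by (rule mm_congL) (simp add: WW k)
    also have "\<dots> = mm n (dg d) (mm n (tp W) W) k k" using k by (simp add: mm_idm_left)
    also have "\<dots> = mm n (dg d) idm k k" by (rule mm_congR) (simp add: WW k)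
    also have "\<dots> = d k" using k by (simp add: mm_idm_right dg_def)
    finally show ?thesis by simp
  qed
  have ev: "mm n Bm W i k = d k * W i k" if ik: "i < n" "k < n" for i k
  proof -
    have "mm n Bm W i k = mm n (mm n (mm n W (dg d)) (tp W)) W i k"
      by (rule mm_congL) (use BW ik in \<open>simp add: mm_dg\<close>)
    also have "\<dots> = mm n (mm n W (dg d)) (mm n (tp W) W) i k" by (simp only: mm_assoc)
    also have "\<dots> = mm n (mm n W (dg d)) idm i k" by (rule mm_congR) (simp add: WW ik)
    also have "\<dots> = mm n W (dg d) i k" using ik by (simp add: mm_idm_right)
    also have "\<dots> = (\<Sum>l<n. if l = k then W i l * d l else 0)"
      unfolding mm_def dg_def by (rule sum.cong) auto
    finally show ?thesis using ik by simp
  qed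
  show ?thesis using W tn dk ev unfolding NW_def Bm_def by blast
qed

lemma tn_block:
  fixes S :: "nat set"
  shows "trace_norm n (\<lambda>i j. if i \<notin> S \<and> j \<notin> S then 1 else 0) = real (card {i\<in>{..<n}. i \<notin> S})"
proof -
  define N :: "nat \<Rightarrow> nat \<Rightarrow> real" where "N = (\<lambda>i j. if i \<notin> S \<and> j \<notin> S then 1 else 0)"
  define T where "T = {i\<in>{..<n}. i \<notin> S}"
  define t where "t = real (card T)"
  have finT: "finite T" unfolding T_def by simp
  obtain W d where W: "orth n W" and tn: "trace_norm n N = (\<Sum>k<n. sqrt (d k))"
    and dk: "\<forall>k<n. d k = (\<Sum>l<n. (mm n N W l k)\<^sup>2)"
    and ev: "\<forall>i<n. \<forall>k<n. mm n (mm n (tp N) N) W i k = d k * W i k"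
    using spectral_M by blast
  define a where "a = (\<lambda>k. \<Sum>i\<in>T. W i k)"
  have sumT: "(\<Sum>i<n. if i \<notin> S then f i else 0) = (\<Sum>i\<in>T. f i)" for f :: "nat \<Rightarrow> real"
    unfolding T_def by (rule sum.inter_filter[symmetric]) simp
  have NW: "mm n N W l k = (if l \<notin> S then a k else 0)" for l k
  proof -
    have "mm n N W l k = (if l \<notin> S then (\<Sum>i<n. if i \<notin> S then W i k else 0) else 0)"
      unfolding mm_def N_def by (auto intro!: sum.cong)
    thus ?thesis using sumT[of "\<lambda>i. W i k"] by (simp add: a_def)
  qed
  have dka: "d k = t * (a k)\<^sup>2" if "k < n" for k
  proof -
    have "d k = (\<Sum>l<n. if l \<notin> S then (a k)\<^sup>2 else 0)" using dk that NW by (auto intro!: sum.cong)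
    also have "\<dots> = t * (a k)\<^sup>2" using sumT[of "\<lambda>_. (a k)\<^sup>2"] by (simp add: t_def)
    finally show ?thesis .
  qed
  have eva: "t * a k = d k * W i k" if "i \<in> T" "k < n" for i k
  proof -
    have i: "i < n" "i \<notin> S" using that unfolding T_def by auto
    have "mm n (mm n (tp N) N) W i k = mm n (tp N) (mm n N W) i k" by (simp only: mm_assoc)
    also have "\<dots> = (\<Sum>l<n. if l \<notin> S then a k else 0)"
      unfolding mm_def[of n "tp N"] using i by (intro sum.cong refl) (simp only: NW, simp add: tp_def N_def)
    also have "\<dots> = t * a k" using sumT[of "\<lambda>_. a k"] by (simp add: t_def)
    finally show ?thesis using ev i that by simp
  qed
  have sq: "sqrt (d k) = (a k)\<^sup>2" if k: "k < n" for k
  proof (cases "t = 0")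
    case True
    hence "T = {}" using finT unfolding t_def by simp
    thus ?thesis using dka[OF k] True by (simp add: a_def)
  next
    case False
    hence tpos: "t > 0" unfolding t_def by simp
    have e1: "(\<Sum>i\<in>T. t * a k) = (\<Sum>i\<in>T. d k * W i k)" using eva k by (intro sum.cong) auto
    have e2: "(\<Sum>i\<in>T. t * a k) = t * t * a k" by (simp add: t_def)
    have e3: "(\<Sum>i\<in>T. d k * W i k) = d k * a k" by (simp add: a_def sum_distrib_left)
    have "t * t * a k = d k * a k" using e1 e2 e3 by linarith
    also have "\<dots> = t * (a k)\<^sup>2 * a k" using dka[OF k] by simp
    finally have "t * (a k * (t - (a k)\<^sup>2)) = 0" by (simp add: algebra_simps power2_eq_square)
    hence "a k * (t - (a k)\<^sup>2) = 0" using tpos by simp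
    hence "a k = 0 \<or> t = (a k)\<^sup>2" by simp
    thus ?thesis
    proof
      assume "a k = 0" thus ?thesis using dka[OF k] by simp
    next
      assume h: "t = (a k)\<^sup>2"
      hence "d k = t\<^sup>2" using dka[OF k] by (simp add: power2_eq_square)
      hence "sqrt (d k) = t" using tpos by simp
      thus ?thesis using h by simp
    qed
  qed
  have "(\<Sum>k<n. (a k)\<^sup>2) = (\<Sum>k<n. \<Sum>i\<in>T. \<Sum>j\<in>T. W i k * W j k)"
    unfolding a_def by (simp add: power2_eq_square sum_product)
  also have "\<dots> = (\<Sum>i\<in>T. \<Sum>j\<in>T. \<Sum>k<n. W i k * W j k)"
  proof -
    have "(\<Sum>k<n. \<Sum>i\<in>T. \<Sum>j\<in>T. W i k * W j k) = (\<Sum>i\<in>T. \<Sum>k<n. \<Sum>j\<in>T. W i k * W j k)"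
      by (rule sum.swap)
    also have "\<dots> = (\<Sum>i\<in>T. \<Sum>j\<in>T. \<Sum>k<n. W i k * W j k)"
      by (rule sum.cong[OF refl], rule sum.swap)
    finally show ?thesis .
  qed
  also have "\<dots> = (\<Sum>i\<in>T. \<Sum>j\<in>T. idm i j)"
    using W unfolding orth_def mm_def tp_def T_def by (intro sum.cong refl) auto
  also have "\<dots> = t" using finT by (simp add: idm_def t_def)
  finally have "(\<Sum>k<n. (a k)\<^sup>2) = t" .
  moreover have "(\<Sum>k<n. sqrt (d k)) = (\<Sum>k<n. (a k)\<^sup>2)" using sq by simp
  ultimately have "trace_norm n N = t" using tn by simp
  thus ?thesis by (simp add: N_def t_def T_def)
qed

lemma p6: "(10::real) powr (-6) = 1/1000000"
  by (simp add: powr_minus powr_realpow)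

lemma op_norm_bound:
  fixes S :: "nat set" and Y :: "nat \<Rightarrow> nat \<Rightarrow> real" and u :: "nat \<Rightarrow> real"
  assumes fin: "finite S"
  shows "0 \<le> op_norm S Y"
    and "(\<Sum>i\<in>S. (\<Sum>j\<in>S. Y i j * u j)\<^sup>2) \<le> (op_norm S Y)\<^sup>2 * (\<Sum>j\<in>S. (u j)\<^sup>2)"
proof -
  define P where "P = {sqrt (\<Sum>i\<in>S. (\<Sum>j\<in>S. Y i j * x j)\<^sup>2) | x. (\<Sum>j\<in>S. (x j)\<^sup>2) \<le> 1}"
  have opP: "op_norm S Y = Sup P" unfolding op_norm_def P_def ..
  have bdd: "bdd_above P"
  proof (rule bdd_aboveI)
    fix e assume "e \<in> P"
    then obtain x where e: "e = sqrt (\<Sum>i\<in>S. (\<Sum>j\<in>S. Y i j * x j)\<^sup>2)" and x: "(\<Sum>j\<in>S. (x j)\<^sup>2) \<le> 1"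
      unfolding P_def by blast
    have "(\<Sum>i\<in>S. (\<Sum>j\<in>S. Y i j * x j)\<^sup>2) \<le> (\<Sum>i\<in>S. (\<Sum>j\<in>S. (Y i j)\<^sup>2) * (\<Sum>j\<in>S. (x j)\<^sup>2))"
      by (rule sum_mono, rule cs_sum)
    also have "\<dots> \<le> (\<Sum>i\<in>S. (\<Sum>j\<in>S. (Y i j)\<^sup>2))"
      by (rule sum_mono) (use x in \<open>auto intro!: mult_left_le sum_nonneg\<close>)
    finally show "e \<le> sqrt (\<Sum>i\<in>S. (\<Sum>j\<in>S. (Y i j)\<^sup>2))" unfolding e by (rule real_sqrt_le_mono)
  qed
  have mem: "sqrt (\<Sum>i\<in>S. (\<Sum>j\<in>S. Y i j * x j)\<^sup>2) \<le> op_norm S Y" if "(\<Sum>j\<in>S. (x j)\<^sup>2) \<le> 1" for x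
    unfolding opP by (rule cSup_upper[OF _ bdd]) (use that in \<open>auto simp: P_def\<close>)
  show nn: "0 \<le> op_norm S Y" using mem[of "\<lambda>_. 0"] by simp
  define q where "q = (\<Sum>j\<in>S. (u j)\<^sup>2)"
  show "(\<Sum>i\<in>S. (\<Sum>j\<in>S. Y i j * u j)\<^sup>2) \<le> (op_norm S Y)\<^sup>2 * (\<Sum>j\<in>S. (u j)\<^sup>2)"
  proof (cases "q = 0")
    case True
    hence "\<forall>j\<in>S. u j = 0" unfolding q_def using fin by (simp add: sum_nonneg_eq_0_iff)
    thus ?thesis by simp
  next
    case False
    hence qpos: "q > 0" unfolding q_def by (metis less_eq_real_def sum_nonneg zero_le_power2)
    define x where "x = (\<lambda>j. u j / sqrt q)"
    have "(\<Sum>j\<in>S. (x j)\<^sup>2) = 1" using qpos by (simp add: x_def power_divide q_def[symmetric] flip: sum_divide_distrib)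
    hence "sqrt (\<Sum>i\<in>S. (\<Sum>j\<in>S. Y i j * x j)\<^sup>2) \<le> op_norm S Y" by (intro mem) simp
    moreover have "(\<Sum>i\<in>S. (\<Sum>j\<in>S. Y i j * x j)\<^sup>2) = (\<Sum>i\<in>S. (\<Sum>j\<in>S. Y i j * u j)\<^sup>2) / q"
    proof -
      have "(\<Sum>j\<in>S. Y i j * x j) = (\<Sum>j\<in>S. Y i j * u j) / sqrt q" for i
        unfolding x_def sum_divide_distrib by (rule sum.cong) auto
      hence "(\<Sum>i\<in>S. (\<Sum>j\<in>S. Y i j * x j)\<^sup>2) = (\<Sum>i\<in>S. (\<Sum>j\<in>S. Y i j * u j)\<^sup>2 / q)"
        using qpos by (simp add: power_divide)
      thus ?thesis by (simp add: sum_divide_distrib)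
    qed
    ultimately have "sqrt ((\<Sum>i\<in>S. (\<Sum>j\<in>S. Y i j * u j)\<^sup>2) / q) \<le> op_norm S Y" by simp
    hence "(\<Sum>i\<in>S. (\<Sum>j\<in>S. Y i j * u j)\<^sup>2) / q \<le> (op_norm S Y)\<^sup>2"
      using nn real_sqrt_le_iff[of _ "(op_norm S Y)\<^sup>2"] by simp
    thus ?thesis using qpos by (simp add: q_def[symmetric] pos_divide_le_eq mult.commute)
  qed
qed

lemma G_bound:
  fixes S :: "nat set" and Y :: "nat \<Rightarrow> nat \<Rightarrow> real" and l :: "nat \<Rightarrow> real"
  assumes S: "S \<subseteq> {..<n}" and l: "\<forall>i<n. l i = -1 \<or> l i = 1" and c: "op_norm S Y \<le> c"
  shows "\<forall>v. (\<Sum>i<n. (\<Sum>j<n. (if i \<in> S \<and> j \<in> S then l i * l j * Y i j else 0) * v j)\<^sup>2) \<le> c\<^sup>2 * (\<Sum>j<n. (v j)\<^sup>2)"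
proof
  fix v :: "nat \<Rightarrow> real"
  have fin: "finite S" using S finite_subset by blast
  have l2: "(l i)\<^sup>2 = 1" if "i \<in> S" for i using l S that by (auto simp: power2_eq_square)
  define u where "u = (\<lambda>j. l j * v j)"
  have row: "(\<Sum>j<n. (if i \<in> S \<and> j \<in> S then l i * l j * Y i j else 0) * v j) = (if i \<in> S then l i * (\<Sum>j\<in>S. Y i j * u j) else 0)" for i
  proof -
    have "(\<Sum>j<n. (if i \<in> S \<and> j \<in> S then l i * l j * Y i j else 0) * v j) = (\<Sum>j<n. if j \<in> S then (if i \<in> S then l i * (Y i j * u j) else 0) else 0)"
      by (rule sum.cong) (auto simp: u_def mult_ac)
    also have "\<dots> = (\<Sum>j\<in>S. (if i \<in> S then l i * (Y i j * u j) else 0))"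
      using S by (simp add: sum.inter_restrict[symmetric] Int_absorb1)
    finally show ?thesis by (simp add: sum_distrib_left)
  qed
  have "(\<Sum>i<n. (\<Sum>j<n. (if i \<in> S \<and> j \<in> S then l i * l j * Y i j else 0) * v j)\<^sup>2) = (\<Sum>i<n. if i \<in> S then (\<Sum>j\<in>S. Y i j * u j)\<^sup>2 else 0)"
    by (rule sum.cong) (auto simp: row power_mult_distrib l2)
  also have "\<dots> = (\<Sum>i\<in>S. (\<Sum>j\<in>S. Y i j * u j)\<^sup>2)"
    using S by (simp add: sum.inter_restrict[symmetric] Int_absorb1)
  also have "\<dots> \<le> (op_norm S Y)\<^sup>2 * (\<Sum>j\<in>S. (u j)\<^sup>2)" by (rule op_norm_bound(2)[OF fin])
  also have "\<dots> \<le> c\<^sup>2 * (\<Sum>j<n. (v j)\<^sup>2)"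
  proof (rule mult_mono)
    show "(op_norm S Y)\<^sup>2 \<le> c\<^sup>2" using op_norm_bound(1)[OF fin] c by (intro power_mono) auto
    have "(\<Sum>j\<in>S. (u j)\<^sup>2) = (\<Sum>j\<in>S. (v j)\<^sup>2)" by (rule sum.cong) (auto simp: u_def power_mult_distrib l2)
    also have "\<dots> \<le> (\<Sum>j<n. (v j)\<^sup>2)" using S by (intro sum_mono2) auto
    finally show "(\<Sum>j\<in>S. (u j)\<^sup>2) \<le> (\<Sum>j<n. (v j)\<^sup>2)" .
  qed (simp_all add: sum_nonneg)
  finally show "(\<Sum>i<n. (\<Sum>j<n. (if i \<in> S \<and> j \<in> S then l i * l j * Y i j else 0) * v j)\<^sup>2) \<le> c\<^sup>2 * (\<Sum>j<n. (v j)\<^sup>2)" .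
qed

lemma sumSS:
  fixes f :: "nat \<Rightarrow> nat \<Rightarrow> real"
  assumes S: "S \<subseteq> {..<n}"
  shows "(\<Sum>i<n. \<Sum>j<n. if i \<in> S \<and> j \<in> S then f i j else 0) = (\<Sum>i\<in>S. \<Sum>j\<in>S. f i j)"
proof -
  have "(\<Sum>i<n. \<Sum>j<n. if i \<in> S \<and> j \<in> S then f i j else 0) = (\<Sum>i<n. if i \<in> S then (\<Sum>j<n. if j \<in> S then f i j else 0) else 0)"
    by (rule sum.cong) auto
  also have "\<dots> = (\<Sum>i<n. if i \<in> S then (\<Sum>j\<in>S. f i j) else 0)"
    using S by (simp add: sum.inter_restrict[symmetric] Int_absorb1)
  also have "\<dots> = (\<Sum>i\<in>S. \<Sum>j\<in>S. f i j)"
    using S by (simp add: sum.inter_restrict[symmetric] Int_absorb1)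
  finally show ?thesis .
qed

lemma sumS1:
  fixes f :: "nat \<Rightarrow> real"
  assumes S: "S \<subseteq> {..<n}"
  shows "(\<Sum>i<n. if i \<in> S then f i else 0) = (\<Sum>i\<in>S. f i)"
  using S by (simp add: sum.inter_restrict[symmetric] Int_absorb1)

lemma frob_rowmat: "frob S X (rowmat x) = (\<Sum>i\<in>S. \<Sum>j\<in>S. X i j * x i)"
  by (simp add: frob_def rowmat_def)

lemma resolv_scaled:
  fixes X :: "nat \<Rightarrow> nat \<Rightarrow> real" and x :: "nat \<Rightarrow> real"
  assumes R: "resolvable S X d1 d2" and fin: "finite S" and d2: "d2 \<ge> 0"
    and x: "\<forall>i\<in>S. 0 \<le> x i \<and> x i \<le> 1"
  shows "frob S X (rowmat x) \<ge> d1 * (\<Sum>i\<in>S. x i) - d2 * real (card S) - 1000000 * d2 * (\<Sum>i\<in>S. x i)"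
proof -
  define s where "s = (\<Sum>i\<in>S. x i)"
  have s0: "s \<ge> 0" unfolding s_def using x by (auto intro: sum_nonneg)
  show ?thesis
  proof (cases "s \<le> 1/1000000 * real (card S)")
    case True
    hence "frob S X (rowmat x) \<ge> d1 * s - d2 * real (card S)"
      using R x unfolding resolvable_def p6 s_def by blast
    moreover have "1000000 * d2 * s \<ge> 0" using d2 s0 by simp
    ultimately show ?thesis unfolding s_def by linarith
  next
    case False
    hence mpos: "card S > 0"
    proof -
      have "S \<noteq> {}" using False s_def by auto
      thus ?thesis using fin by (simp add: card_gt_0_iff)
    qed
    define c where "c = 1000000 * s / real (card S)"
    have c1: "c > 1" using False mpos by (simp add: c_def field_simps)
    define x' where "x' = (\<lambda>i. x i / c)"
    have x': "\<forall>i\<in>S. 0 \<le> x' i \<and> x' i \<le> 1" using x c1 by (auto simp: x'_def divide_le_eq_1)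
    have sx': "(\<Sum>i\<in>S. x' i) = s / c" by (simp add: x'_def s_def sum_divide_distrib)
    have "s / c = 1/1000000 * real (card S)" using mpos False by (simp add: c_def field_simps)
    hence "frob S X (rowmat x') \<ge> d1 * (s / c) - d2 * real (card S)"
      using R x' sx' unfolding resolvable_def p6 by auto
    moreover have "frob S X (rowmat x') = frob S X (rowmat x) / c"
      unfolding frob_rowmat x'_def by (simp add: sum_divide_distrib)
    ultimately have "frob S X (rowmat x) / c \<ge> d1 * (s / c) - d2 * real (card S)" by simp
    hence "frob S X (rowmat x) \<ge> c * (d1 * (s / c) - d2 * real (card S))"
      using c1 by (simp add: pos_le_divide_eq mult.commute)
    also have "c * (d1 * (s / c) - d2 * real (card S)) = d1 * s - 1000000 * d2 * s"
      using c1 mpos by (simp add: c_def field_simps)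
    finally have "frob S X (rowmat x) \<ge> d1 * s - 1000000 * d2 * s" .
    moreover have "d2 * real (card S) \<ge> 0" using d2 by simp
    ultimately show ?thesis unfolding s_def by linarith
  qed
qed

lemma theta_small:
  fixes n :: nat and A F Y Z :: "nat \<Rightarrow> nat \<Rightarrow> real" and l :: "nat \<Rightarrow> real"
    and \<zeta> d K \<theta> :: real and S :: "nat set"
  assumes l: "\<forall>i<n. l i = -1 \<or> l i = 1"
    and \<zeta>: "0 < \<zeta>" "\<zeta> < 1" and d: "d > 0" and K: "K \<ge> 10^4"
    and S: "S \<subseteq> {..<n}" and Sne: "S \<noteq> {}"
    and \<theta>: "0 \<le> \<theta>" "\<theta> \<le> \<zeta>"
    and Yeq: "\<forall>i\<in>S. \<forall>j\<in>S. A i j - F i j = Y i j + Z i j" and opY: "op_norm S Y \<le> K * d"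
    and Zb: "\<forall>i\<in>S. \<forall>j\<in>S. \<bar>Z i j\<bar> \<le> K * d / (\<zeta> * real n)"
    and iii: "resolvable S (hadamard (\<lambda>i j. A i j - F i j) (\<lambda>i j. l i * l j)) (10 * d * K^3) (\<theta> * d * K)"
  shows "\<theta> \<le> 1/100"
proof (rule ccontr)
  assume big: "\<not> \<theta> \<le> 1/100"
  have fin: "finite S" using S finite_subset by blast
  define m where "m = real (card S)"
  have mpos: "m > 0" using Sne fin by (simp add: m_def card_gt_0_iff)
  have mn: "m \<le> real n" unfolding m_def using card_mono[OF _ S] by simp
  have npos: "real n > 0" using mpos mn by linarith
  define X where "X = hadamard (\<lambda>i j. A i j - F i j) (\<lambda>i j. l i * l j)"
  define x0 where "x0 = (\<lambda>i::nat. 1/1000000 :: real)"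
  have R: "\<forall>x. (\<forall>i\<in>S. 0 \<le> x i \<and> x i \<le> 1) \<and> (\<Sum>i\<in>S. x i) \<le> 1/1000000 * real (card S) \<longrightarrow>
      frob S X (rowmat x) \<ge> 10 * d * K^3 * (\<Sum>i\<in>S. x i) - \<theta> * d * K * real (card S)"
    using iii unfolding resolvable_def X_def[symmetric] p6 .
  have "frob S X (rowmat x0) \<ge> 10 * d * K^3 * (\<Sum>i\<in>S. x0 i) - \<theta> * d * K * real (card S)"
    by (rule R[rule_format]) (auto simp: x0_def)
  moreover have "frob S X (rowmat x0) = (\<Sum>i\<in>S. \<Sum>j\<in>S. X i j) / 1000000"
    unfolding frob_rowmat x0_def by (simp add: sum_divide_distrib)
  moreover have "(\<Sum>i\<in>S. x0 i) = m / 1000000" by (simp add: x0_def m_def)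
  ultimately have E0: "(\<Sum>i\<in>S. \<Sum>j\<in>S. X i j) / 1000000 \<ge> 10 * d * K^3 * (m / 1000000) - \<theta> * d * K * m"
    by (simp add: m_def)
  define G where "G = (\<lambda>i j. if i \<in> S \<and> j \<in> S then l i * l j * Y i j else 0)"
  define v where "v = (\<lambda>i. if i \<in> S then 1 else (0::real))"
  have Gb: "(\<Sum>i<n. (\<Sum>j<n. G i j * v j)\<^sup>2) \<le> (K * d)\<^sup>2 * (\<Sum>j<n. (v j)\<^sup>2)"
    using G_bound[OF S l opY] unfolding G_def by blast
  have v2: "(\<Sum>j<n. (v j)\<^sup>2) = m"
  proof -
    have "(\<Sum>j<n. (v j)\<^sup>2) = (\<Sum>j<n. if j \<in> S then 1 else 0)" by (rule sum.cong) (auto simp: v_def)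
    thus ?thesis using sumS1[OF S, of "\<lambda>_. 1"] by (simp add: m_def)
  qed
  have Ysum: "(\<Sum>i\<in>S. \<Sum>j\<in>S. l i * l j * Y i j) = (\<Sum>i<n. v i * (\<Sum>j<n. G i j * v j))"
  proof -
    have inner: "(\<Sum>j<n. G i j * v j) = (\<Sum>j<n. if i \<in> S \<and> j \<in> S then l i * l j * Y i j else 0)" for i
      by (rule sum.cong) (auto simp: G_def v_def)
    have "(\<Sum>i<n. v i * (\<Sum>j<n. G i j * v j)) = (\<Sum>i<n. \<Sum>j<n. if i \<in> S \<and> j \<in> S then l i * l j * Y i j else 0)"
      by (intro sum.cong refl) (simp only: inner, simp add: v_def)
    thus ?thesis using sumSS[OF S] by simp
  qed
  have "\<bar>\<Sum>i<n. v i * (\<Sum>j<n. G i j * v j)\<bar> \<le> sqrt (\<Sum>i<n. (v i)\<^sup>2) * sqrt (\<Sum>i<n. (\<Sum>j<n. G i j * v j)\<^sup>2)"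
    by (rule abs_sum_le_cs)
  also have "\<dots> \<le> sqrt m * sqrt ((K * d)\<^sup>2 * m)"
  proof -
    have a: "sqrt (\<Sum>i<n. (\<Sum>j<n. G i j * v j)\<^sup>2) \<le> sqrt ((K * d)\<^sup>2 * m)"
      using Gb v2 by (intro real_sqrt_le_mono) simp
    have b: "sqrt (\<Sum>i<n. (v i)\<^sup>2) = sqrt m" using v2 by simp
    show ?thesis by (simp only: b) (rule mult_left_mono[OF a], simp add: m_def)
  qed
  also have "\<dots> = K * d * m" using mpos K d by (simp add: real_sqrt_mult)
  finally have Yb: "(\<Sum>i\<in>S. \<Sum>j\<in>S. l i * l j * Y i j) \<le> K * d * m" using Ysum by simp
  have Zb2: "(\<Sum>i\<in>S. \<Sum>j\<in>S. l i * l j * Z i j) \<le> (\<Sum>i\<in>S. \<Sum>j\<in>S. K * d / (\<zeta> * real n))"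
  proof (intro sum_mono)
    fix i j assume ij: "i \<in> S" "j \<in> S"
    have "i < n" "j < n" using S ij by auto
    hence "\<bar>l i\<bar> = 1" "\<bar>l j\<bar> = 1" using l by fastforce+
    hence "\<bar>l i * l j\<bar> = 1" by (simp add: abs_mult)
    hence "l i * l j * Z i j \<le> \<bar>Z i j\<bar>" by (metis abs_ge_self abs_mult mult_1)
    thus "l i * l j * Z i j \<le> K * d / (\<zeta> * real n)" using Zb ij by force
  qed
  have "(\<Sum>i\<in>S. \<Sum>j\<in>S. K * d / (\<zeta> * real n)) = m * m * (K * d / (\<zeta> * real n))" by (simp add: m_def)
  also have "\<dots> \<le> m * (K * d / \<zeta>)"
  proof -
    have "m * (K * d / (\<zeta> * real n)) \<le> K * d / \<zeta>"
    proof -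
      have "m * (K * d / (\<zeta> * real n)) = (m / real n) * (K * d / \<zeta>)" by (simp add: field_simps)
      also have "\<dots> \<le> 1 * (K * d / \<zeta>)"
        using mn npos \<zeta> K d by (intro mult_right_mono) (auto simp: divide_le_eq_1)
      finally show ?thesis by simp
    qed
    thus ?thesis using mpos by (metis mult.assoc mult_le_cancel_left_pos)
  qed
  finally have Zb3: "(\<Sum>i\<in>S. \<Sum>j\<in>S. l i * l j * Z i j) \<le> m * (K * d / \<zeta>)" using Zb2 by linarith
  have Xsum: "(\<Sum>i\<in>S. \<Sum>j\<in>S. X i j) = (\<Sum>i\<in>S. \<Sum>j\<in>S. l i * l j * Y i j) + (\<Sum>i\<in>S. \<Sum>j\<in>S. l i * l j * Z i j)"
    unfolding sum.distrib[symmetric] by (intro sum.cong refl) (use Yeq in \<open>auto simp: X_def hadamard_def algebra_simps\<close>)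
  have E1: "K * d * m + m * (K * d / \<zeta>) \<ge> 10 * d * K^3 * m - 1000000 * \<theta> * d * K * m"
  proof -
    have "(\<Sum>i\<in>S. \<Sum>j\<in>S. X i j) \<le> K * d * m + m * (K * d / \<zeta>)" using Xsum Yb Zb3 by linarith
    hence "(\<Sum>i\<in>S. \<Sum>j\<in>S. X i j) / 1000000 \<le> (K * d * m + m * (K * d / \<zeta>)) / 1000000" by simp
    hence h: "10 * d * K^3 * (m / 1000000) - \<theta> * d * K * m \<le> (K * d * m + m * (K * d / \<zeta>)) / 1000000" using E0 by linarith
    have "1000000 * (10 * d * K^3 * (m / 1000000) - \<theta> * d * K * m) \<le> 1000000 * ((K * d * m + m * (K * d / \<zeta>)) / 1000000)"
      using h by (rule mult_left_mono) simp
    moreover have "1000000 * (10 * d * K^3 * (m / 1000000) - \<theta> * d * K * m) = 10 * d * K^3 * m - 1000000 * \<theta> * d * K * m"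
      by (simp add: algebra_simps)
    moreover have "1000000 * ((K * d * m + m * (K * d / \<zeta>)) / 1000000) = K * d * m + m * (K * d / \<zeta>)" by simp
    ultimately show ?thesis by linarith
  qed
  have E2: "K * d * m * (1 + 1 / \<zeta>) \<ge> K * d * m * (10 * K^2 - 1000000 * \<theta>)"
  proof -
    have "K * d * m * (1 + 1 / \<zeta>) = K * d * m + m * (K * d / \<zeta>)" by (simp add: algebra_simps)
    moreover have "K * d * m * (10 * K^2 - 1000000 * \<theta>) = 10 * d * K^3 * m - 1000000 * \<theta> * d * K * m"
      by (simp add: algebra_simps power2_eq_square power3_eq_cube)
    ultimately show ?thesis using E1 by linarith
  qed
  have Kdm: "K * d * m > 0" using K d mpos by simp
  have E3: "1 + 1 / \<zeta> \<ge> 10 * K^2 - 1000000 * \<theta>"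
    using mult_le_cancel_left_pos[OF Kdm] E2 by blast
  have "\<zeta> > 1/100" using big \<theta> by linarith
  hence z100: "1 / \<zeta> < 100" using \<zeta> by (simp add: divide_less_eq)
  have "K^2 \<ge> (10^4)^2" using K by (intro power_mono) auto
  hence "10 * K^2 \<ge> 1000000000" by simp
  moreover have "1000000 * \<theta> \<le> 1000000" using \<theta> \<zeta> by simp
  ultimately show False using E3 z100 by linarith
qed

lemma main_ineq:
  fixes n :: nat and A F Y Z M :: "nat \<Rightarrow> nat \<Rightarrow> real" and l x :: "nat \<Rightarrow> real"
    and \<zeta> d K \<theta> \<rho> :: real and S :: "nat set"
  assumes l: "\<forall>i<n. l i = -1 \<or> l i = 1"
    and \<zeta>: "0 < \<zeta>" "\<zeta> < 1" and d: "d > 0" and K: "K \<ge> 10^4"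
    and S: "S \<subseteq> {..<n}" and npos: "0 < n"
    and \<theta>: "0 \<le> \<theta>" "\<theta> \<le> \<zeta>"
    and i: "\<forall>i\<in>S. \<forall>j\<in>S. F i j * (l i * l j) \<ge> 0"
    and Yeq: "\<forall>i\<in>S. \<forall>j\<in>S. A i j - F i j = Y i j + Z i j" and opY: "op_norm S Y \<le> K * d"
    and Zb: "\<forall>i\<in>S. \<forall>j\<in>S. \<bar>Z i j\<bar> \<le> K * d / (\<zeta> * real n)"
    and iii: "resolvable S (hadamard (\<lambda>i j. A i j - F i j) (\<lambda>i j. l i * l j)) (10 * d * K^3) (\<theta> * d * K)"
    and rho: "\<theta> / K \<le> \<rho>" "\<rho> \<le> \<zeta>"
    and rs: "row_selector n \<rho> (K * \<rho>) M x"
  shows "frob {..<n} (hadamard (hadamard A (\<lambda>i j. l i * l j)) (\<lambda>i j. if i \<in> S \<and> j \<in> S then 1 else 0)) M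
           \<ge> 10 * d * K\<^sup>2 * (K * (\<Sum>i<n. x i * (1 - (if i \<in> S then 0 else 1))) - \<rho> * real n)"
proof -
  have fin: "finite S" using S finite_subset by blast
  have Kpos: "K > 0" using K by simp
  have "\<theta> / K \<ge> 0" using \<theta> Kpos by simp
  hence rho0: "\<rho> \<ge> 0" using rho(1) by linarith
  obtain N' where Mr: "\<forall>i<n. \<forall>j<n. 0 \<le> M i j \<and> M i j \<le> 1" and xr: "\<forall>i<n. 0 \<le> x i \<and> x i \<le> 1"
    and xs: "(\<Sum>i<n. x i) \<le> \<rho> * real n"
    and pr: "pseudorect n (sqrt (\<rho> * (K * \<rho>))) N'" and MN: "\<forall>i<n. \<forall>j<n. M i j = rowmat x i j - N' i j"
    using rs unfolding row_selector_def by blast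
  have sq: "sqrt (\<rho> * (K * \<rho>)) = \<rho> * sqrt K"
    using rho0 Kpos by (simp add: real_sqrt_mult)
  have N'r: "\<forall>i<n. \<forall>j<n. 0 \<le> N' i j \<and> N' i j \<le> 1" and N's: "(\<Sum>i<n. \<Sum>j<n. \<bar>N' i j\<bar>) \<le> (\<rho> * sqrt K)\<^sup>2 * (real n)\<^sup>2"
    and N't: "trace_norm n N' \<le> \<rho> * sqrt K * real n"
    using pr unfolding pseudorect_def sq by auto
  define m where "m = real (card S)"
  have mn: "m \<le> real n" unfolding m_def using card_mono[OF _ S] by simp
  define s where "s = (\<Sum>i\<in>S. x i)"
  have xS: "\<forall>i\<in>S. 0 \<le> x i \<and> x i \<le> 1" using xr S by auto
  have s0: "s \<ge> 0" unfolding s_def using xS by (auto intro: sum_nonneg)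
  have sle: "s \<le> \<rho> * real n"
  proof -
    have "s \<le> (\<Sum>i<n. x i)" unfolding s_def using S xr by (intro sum_mono2) auto
    thus ?thesis using xs by linarith
  qed
  have rhs: "(\<Sum>i<n. x i * (1 - (if i \<in> S then 0 else 1))) = s"
  proof -
    have "(\<Sum>i<n. x i * (1 - (if i \<in> S then 0 else 1))) = (\<Sum>i<n. if i \<in> S then x i else 0)"
      by (rule sum.cong) auto
    thus ?thesis using sumS1[OF S] s_def by simp
  qed
  define X where "X = (\<lambda>i j. (A i j - F i j) * (l i * l j))"
  have lhs: "frob {..<n} (hadamard (hadamard A (\<lambda>i j. l i * l j)) (\<lambda>i j. if i \<in> S \<and> j \<in> S then 1 else 0)) M
      = (\<Sum>i\<in>S. \<Sum>j\<in>S. F i j * (l i * l j) * M i j) + (\<Sum>i\<in>S. \<Sum>j\<in>S. X i j * M i j)"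
  proof -
    have "frob {..<n} (hadamard (hadamard A (\<lambda>i j. l i * l j)) (\<lambda>i j. if i \<in> S \<and> j \<in> S then 1 else 0)) M
       = (\<Sum>i<n. \<Sum>j<n. if i \<in> S \<and> j \<in> S then A i j * (l i * l j) * M i j else 0)"
      unfolding frob_def hadamard_def by (intro sum.cong refl) auto
    also have "\<dots> = (\<Sum>i\<in>S. \<Sum>j\<in>S. A i j * (l i * l j) * M i j)" by (rule sumSS[OF S])
    also have "\<dots> = (\<Sum>i\<in>S. \<Sum>j\<in>S. F i j * (l i * l j) * M i j + X i j * M i j)"
      by (intro sum.cong refl) (simp add: X_def algebra_simps)
    finally show ?thesis by (simp add: sum.distrib)
  qed
  have P1: "(\<Sum>i\<in>S. \<Sum>j\<in>S. F i j * (l i * l j) * M i j) \<ge> 0"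
  proof (intro sum_nonneg)
    fix i j assume ij: "i \<in> S" "j \<in> S"
    hence "M i j \<ge> 0" using Mr S by auto
    thus "F i j * (l i * l j) * M i j \<ge> 0" using i ij by simp
  qed
  have P2: "(\<Sum>i\<in>S. \<Sum>j\<in>S. X i j * M i j) = frob S (hadamard (\<lambda>i j. A i j - F i j) (\<lambda>i j. l i * l j)) (rowmat x) - (\<Sum>i\<in>S. \<Sum>j\<in>S. X i j * N' i j)"
  proof -
    have "(\<Sum>i\<in>S. \<Sum>j\<in>S. X i j * M i j) = (\<Sum>i\<in>S. \<Sum>j\<in>S. X i j * x i - X i j * N' i j)"
    proof (intro sum.cong refl)
      fix i j assume ij: "i \<in> S" "j \<in> S"
      hence "M i j = x i - N' i j" using MN S by (auto simp: rowmat_def)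
      thus "X i j * M i j = X i j * x i - X i j * N' i j" by (simp add: right_diff_distrib)
    qed
    thus ?thesis unfolding frob_rowmat by (simp add: sum_subtractf X_def hadamard_def)
  qed
  have P3: "frob S (hadamard (\<lambda>i j. A i j - F i j) (\<lambda>i j. l i * l j)) (rowmat x) \<ge> 10 * d * K^3 * s - \<theta> * d * K * m - 1000000 * (\<theta> * d * K) * s"
    using resolv_scaled[OF iii fin _ xS] \<theta> d Kpos unfolding s_def m_def by simp
  define G where "G = (\<lambda>i j. if i \<in> S \<and> j \<in> S then l i * l j * Y i j else 0)"
  have XN: "(\<Sum>i\<in>S. \<Sum>j\<in>S. X i j * N' i j) = (\<Sum>i<n. \<Sum>j<n. G i j * N' i j) + (\<Sum>i\<in>S. \<Sum>j\<in>S. l i * l j * Z i j * N' i j)"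
  proof -
    have "(\<Sum>i<n. \<Sum>j<n. G i j * N' i j) = (\<Sum>i<n. \<Sum>j<n. if i \<in> S \<and> j \<in> S then l i * l j * Y i j * N' i j else 0)"
      unfolding G_def by (intro sum.cong refl) auto
    also have "\<dots> = (\<Sum>i\<in>S. \<Sum>j\<in>S. l i * l j * Y i j * N' i j)" by (rule sumSS[OF S])
    finally have g: "(\<Sum>i<n. \<Sum>j<n. G i j * N' i j) = (\<Sum>i\<in>S. \<Sum>j\<in>S. l i * l j * Y i j * N' i j)" .
    have "(\<Sum>i\<in>S. \<Sum>j\<in>S. X i j * N' i j) = (\<Sum>i\<in>S. \<Sum>j\<in>S. l i * l j * Y i j * N' i j + l i * l j * Z i j * N' i j)"
      using Yeq by (intro sum.cong refl) (simp add: X_def algebra_simps)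
    thus ?thesis unfolding g by (simp add: sum.distrib)
  qed
  have Kd0: "K * d \<ge> 0" using Kpos d by simp
  have YN: "\<bar>\<Sum>i<n. \<Sum>j<n. G i j * N' i j\<bar> \<le> K * d * (\<rho> * sqrt K * real n)"
  proof -
    have "\<bar>\<Sum>i<n. \<Sum>j<n. G i j * N' i j\<bar> \<le> K * d * trace_norm n N'"
      by (rule tn_dual[OF Kd0]) (use G_bound[OF S l opY] in \<open>simp add: G_def\<close>)
    also have "\<dots> \<le> K * d * (\<rho> * sqrt K * real n)" by (rule mult_left_mono[OF N't Kd0])
    finally show ?thesis .
  qed
  have ZN: "\<bar>\<Sum>i\<in>S. \<Sum>j\<in>S. l i * l j * Z i j * N' i j\<bar> \<le> K^2 * d * \<rho> * real n"
  proof -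
    define c where "c = K * d / (\<zeta> * real n)"
    have c0: "c \<ge> 0" unfolding c_def using Kd0 \<zeta> by simp
    have "\<bar>\<Sum>i\<in>S. \<Sum>j\<in>S. l i * l j * Z i j * N' i j\<bar> \<le> (\<Sum>i\<in>S. \<Sum>j\<in>S. c * N' i j)"
    proof -
      have "\<bar>\<Sum>i\<in>S. \<Sum>j\<in>S. l i * l j * Z i j * N' i j\<bar> \<le> (\<Sum>i\<in>S. \<bar>\<Sum>j\<in>S. l i * l j * Z i j * N' i j\<bar>)"
        by (rule sum_abs)
      also have "\<dots> \<le> (\<Sum>i\<in>S. \<Sum>j\<in>S. \<bar>l i * l j * Z i j * N' i j\<bar>)"
        by (intro sum_mono sum_abs)
      also have "\<dots> \<le> (\<Sum>i\<in>S. \<Sum>j\<in>S. c * N' i j)"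
      proof (intro sum_mono)
        fix i j assume ij: "i \<in> S" "j \<in> S"
        have "i < n" "j < n" using S ij by auto
        hence "\<bar>l i\<bar> = 1" "\<bar>l j\<bar> = 1" and Nij: "0 \<le> N' i j" using l N'r by fastforce+
        hence "\<bar>l i * l j * Z i j * N' i j\<bar> = \<bar>Z i j\<bar> * N' i j" by (simp add: abs_mult)
        also have "\<dots> \<le> c * N' i j" using Zb ij Nij unfolding c_def by (intro mult_right_mono) auto
        finally show "\<bar>l i * l j * Z i j * N' i j\<bar> \<le> c * N' i j" .
      qed
      finally show ?thesis .
    qed
    also have "\<dots> = c * (\<Sum>i<n. \<Sum>j<n. if i \<in> S \<and> j \<in> S then N' i j else 0)"
      by (simp add: sumSS[OF S] sum_distrib_left)
    also have "\<dots> \<le> c * (\<Sum>i<n. \<Sum>j<n. \<bar>N' i j\<bar>)"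
      using c0 N'r by (intro mult_left_mono sum_mono) auto
    also have "\<dots> \<le> c * ((\<rho> * sqrt K)\<^sup>2 * (real n)\<^sup>2)" by (rule mult_left_mono[OF N's c0])
    also have "\<dots> = K^2 * d * \<rho> * real n * (\<rho> / \<zeta>)"
      using npos \<zeta> Kpos by (simp add: c_def power2_eq_square field_simps)
    also have "\<dots> \<le> K^2 * d * \<rho> * real n * 1"
      using rho rho0 \<zeta> Kpos d by (intro mult_left_mono) (auto simp: divide_le_eq_1)
    finally show ?thesis by simp
  qed
  have Zs: "1000000 * (\<theta> * d * K) * s \<le> K^2 * d * \<rho> * real n"
  proof (cases "S = {}")
    case True thus ?thesis using d rho0 by (simp add: s_def)
  next
    case False
    have t100: "\<theta> \<le> 1/100"
      by (rule theta_small[OF l \<zeta> d K S False \<theta> Yeq opY Zb iii])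
    have "1000000 * (\<theta> * d * K) * s = (1000000 * \<theta>) * (d * K * s)" by (simp add: algebra_simps)
    also have "\<dots> \<le> K * (d * K * s)"
      using t100 K d s0 by (intro mult_right_mono) auto
    also have "\<dots> = K^2 * d * s" by (simp add: power2_eq_square algebra_simps)
    also have "\<dots> \<le> K^2 * d * (\<rho> * real n)" using sle d by (intro mult_left_mono) auto
    finally show ?thesis by (simp add: algebra_simps)
  qed
  have Tm: "\<theta> * d * K * m \<le> K^2 * d * \<rho> * real n"
  proof -
    have "\<theta> \<le> K * \<rho>" using rho(1) Kpos by (simp add: divide_le_eq mult.commute)
    hence "\<theta> * m \<le> K * \<rho> * real n" using mn \<theta> rho0 Kpos by (intro mult_mono) (auto simp: m_def)
    hence "d * K * (\<theta> * m) \<le> d * K * (K * \<rho> * real n)" using d Kpos by (intro mult_left_mono) auto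
    thus ?thesis by (simp add: power2_eq_square algebra_simps)
  qed
  have sqK: "K * d * (\<rho> * sqrt K * real n) \<le> K^2 * d * \<rho> * real n"
  proof -
    have "K * 1 \<le> K * K" using K by (intro mult_left_mono) auto
    hence "sqrt K \<le> sqrt (K * K)" by (intro real_sqrt_le_mono) simp
    hence "sqrt K \<le> K" using Kpos by simp
    hence "(K * d * \<rho> * real n) * sqrt K \<le> (K * d * \<rho> * real n) * K" using Kpos d rho0 by (intro mult_left_mono) auto
    thus ?thesis by (simp add: power2_eq_square algebra_simps)
  qed
  have "frob {..<n} (hadamard (hadamard A (\<lambda>i j. l i * l j)) (\<lambda>i j. if i \<in> S \<and> j \<in> S then 1 else 0)) M
     \<ge> 10 * d * K^3 * s - 4 * (K^2 * d * \<rho> * real n)"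
    using lhs P1 P2 P3 XN YN ZN Zs Tm sqK by linarith
  moreover have "10 * d * K\<^sup>2 * (K * s - \<rho> * real n) = 10 * d * K^3 * s - 10 * (K^2 * d * \<rho> * real n)"
    by (simp add: algebra_simps power2_eq_square power3_eq_cube)
  moreover have "K^2 * d * \<rho> * real n \<ge> 0" using d rho0 by simp
  ultimately show ?thesis unfolding rhs by linarith
qed

theorem mainTheorem12:
  fixes n :: nat and A F :: "nat \<Rightarrow> nat \<Rightarrow> real" and l :: "nat \<Rightarrow> real"
    and \<zeta> d K \<theta> :: real and S :: "nat set"
  assumes l: "\<forall>i<n. l i = -1 \<or> l i = 1"
    and \<zeta>: "0 < \<zeta>" "\<zeta> < 1" and d: "d > 0" and K: "K \<ge> 10^4"
    and S: "S \<subseteq> {..<n}" "real (card S) \<ge> (1 - \<theta>) * real n"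
    and \<theta>: "0 \<le> \<theta>" "\<theta> \<le> \<zeta>"
    and i: "\<forall>i\<in>S. \<forall>j\<in>S. F i j * (l i * l j) \<ge> 0"
    and ii: "\<exists>Y Z. (\<forall>i\<in>S. \<forall>j\<in>S. A i j - F i j = Y i j + Z i j) \<and> op_norm S Y \<le> K * d \<and>
               (\<forall>i\<in>S. \<forall>j\<in>S. \<bar>Z i j\<bar> \<le> K * d / (\<zeta> * real n))"
    and iii: "resolvable S (hadamard (\<lambda>i j. A i j - F i j) (\<lambda>i j. l i * l j)) (10 * d * K^3) (\<theta> * d * K)"
  shows "boost_feasible n A l \<zeta> d K \<theta>
           (\<lambda>i. if i \<in> S then 0 else 1)
           (\<lambda>i j. if i \<in> S \<and> j \<in> S then 1 else 0)
           (\<lambda>i j. if i \<notin> S \<and> j \<notin> S then 1 else 0)"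
proof -
  obtain Y Z where Yeq: "\<forall>i\<in>S. \<forall>j\<in>S. A i j - F i j = Y i j + Z i j" and opY: "op_norm S Y \<le> K * d"
    and Zb: "\<forall>i\<in>S. \<forall>j\<in>S. \<bar>Z i j\<bar> \<le> K * d / (\<zeta> * real n)"
    using ii by blast
  have fin: "finite S" using S(1) finite_subset by blast
  define T where "T = {i\<in>{..<n}. i \<notin> S}"
  have TD: "T = {..<n} - S" unfolding T_def by auto
  have cS: "card S \<le> n" using card_mono[OF _ S(1)] by simp
  have cT: "real (card T) = real n - real (card S)"
    unfolding TD using card_Diff_subset[OF fin S(1)] cS by simp
  have tle: "real (card T) \<le> \<theta> * real n" using cT S(2) by (simp add: algebra_simps)
  have sum1: "(\<Sum>i<n. if i \<notin> S then f else 0) = real (card T) * f" for f :: real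
  proof -
    have "(\<Sum>i<n. if i \<notin> S then f else 0) = (\<Sum>i\<in>T. f)"
      unfolding T_def by (rule sum.inter_filter[symmetric]) simp
    thus ?thesis by simp
  qed
  have wsum: "(\<Sum>i<n. (if i \<in> S then 0 else 1)) = real (card T)"
  proof -
    have "(\<Sum>i<n. (if i \<in> S then 0 else 1)) = (\<Sum>i<n. if i \<notin> S then (1::real) else 0)"
      by (rule sum.cong) auto
    thus ?thesis using sum1[of 1] by simp
  qed
  have Nsum: "(\<Sum>i<n. \<Sum>j<n. \<bar>if i \<notin> S \<and> j \<notin> S then 1 else 0\<bar>) = (real (card T))\<^sup>2"
  proof -
    have "(\<Sum>i<n. \<Sum>j<n. \<bar>if i \<notin> S \<and> j \<notin> S then 1 else (0::real)\<bar>) = (\<Sum>i<n. if i \<notin> S then real (card T) else 0)"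
    proof (rule sum.cong[OF refl])
      fix i
      have "(\<Sum>j<n. \<bar>if i \<notin> S \<and> j \<notin> S then 1 else (0::real)\<bar>) = (if i \<notin> S then (\<Sum>j<n. if j \<notin> S then 1 else 0) else 0)"
        by (auto intro!: sum.cong)
      thus "(\<Sum>j<n. \<bar>if i \<notin> S \<and> j \<notin> S then 1 else (0::real)\<bar>) = (if i \<notin> S then real (card T) else 0)"
        using sum1[of 1] by simp
    qed
    thus ?thesis using sum1[of "real (card T)"] by (simp add: power2_eq_square)
  qed
  have pr: "pseudorect n \<theta> (\<lambda>i j. if i \<notin> S \<and> j \<notin> S then 1 else 0)"
    unfolding pseudorect_def
  proof (intro conjI)
    show "(\<Sum>i<n. \<Sum>j<n. \<bar>if i \<notin> S \<and> j \<notin> S then 1 else (0::real)\<bar>) \<le> \<theta>\<^sup>2 * (real n)\<^sup>2"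
      unfolding Nsum using tle by (simp add: power_mult_distrib[symmetric] power_mono)
    show "trace_norm n (\<lambda>i j. if i \<notin> S \<and> j \<notin> S then 1 else 0) \<le> \<theta> * real n"
      using tn_block[of n S] tle unfolding T_def by simp
  qed auto
  have main: "\<forall>\<rho>'. \<theta> / K \<le> \<rho>' \<and> \<rho>' \<le> \<zeta> \<longrightarrow>
        (\<forall>M x. row_selector n \<rho>' (K * \<rho>') M x \<longrightarrow>
           frob {..<n} (hadamard (hadamard A (\<lambda>i j. l i * l j)) (\<lambda>i j. if i \<in> S \<and> j \<in> S then 1 else 0)) M
             \<ge> 10 * d * K\<^sup>2 * (K * (\<Sum>i<n. x i * (1 - (if i \<in> S then 0 else 1))) - \<rho>' * real n))"
  proof (intro allI impI, elim conjE)
    fix \<rho>' M x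
    assume r: "\<theta> / K \<le> \<rho>'" "\<rho>' \<le> \<zeta>" and rs: "row_selector n \<rho>' (K * \<rho>') M x"
    show "frob {..<n} (hadamard (hadamard A (\<lambda>i j. l i * l j)) (\<lambda>i j. if i \<in> S \<and> j \<in> S then 1 else 0)) M
             \<ge> 10 * d * K\<^sup>2 * (K * (\<Sum>i<n. x i * (1 - (if i \<in> S then 0 else 1))) - \<rho>' * real n)"
    proof (cases "n = 0")
      case True thus ?thesis by (simp add: frob_def)
    next
      case False
      hence npos: "0 < n" by simp
      show ?thesis by (rule main_ineq[OF l \<zeta> d K S(1) npos \<theta> i Yeq opY Zb iii r rs])
    qed
  qed
  show ?thesis
    unfolding boost_feasible_def
    using \<theta> pr wsum tle main by auto
qed

end
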